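(* Let $L\subset S^3$ be an oriented link. The set $\widehat{\mathcal{B}}_L$ equipped with the operations $\uparrow,\downarrow$ defined in the context is a biquandle.
   Context: An oriented link $L$ is an oriented subspace of $S^3$ homeomorphic to a finite disjoint union of circles. Let $N_L$ be a regular neighborhood of $L$ and $E_L$ the closure of $S^3\setminus N_L$; the orientation of $L$ induces an orientation of its normal bundle by the right-hand rule. Choose a 3-ball $B^3\subset S^3$ with $N_L\subset B^3$ and antipodal points $z_0,z_1\in\partial B^3$. For a path $a$, $\overline{a}(t)=a(1-t)$; $a\cdot b$ is concatenation. Let $\mathcal{B}_L$ be the set of pairs $(a_0,a_1)$ with $a_i\colon[0,1]\to E_L$ a path from a point of $\partial N_L$ to $z_i$ and $a_0(0)=a_1(0)$. Set $(a_0,a_1)\sim(b_0,b_1)$ if there is a homotopy $H_t\colon[0,1]\to E_L$ with $H_0=\overline{a_0}\cdot a_1$, $H_1=\overline{b_0}\cdot b_1$, $H_t(0)=z_0$, $H_t(1)=z_1$, $H_t(\tfrac12)\in\partial N_L$ for all $t$. Let $\widehat{\mathcal{B}}_L=\mathcal{B}_L/\!\sim$, with $[a_0,a_1]$ the class of $(a_0,a_1)$. For $p\in\partial N_L$, $m_p$ is the loop in $\partial N_L$ at $p$ going once positively around the meridian of the corresponding component of $L$. The (well-defined) operations on $\widehat{\mathcal{B}}_L$ are $[a_0,a_1]\uparrow[b_0,b_1]=[a_0\cdot\overline{b_0}\cdot m_{b_0(0)}\cdot b_0,\ a_1]$ and $[a_0,a_1]\downarrow[b_0,b_1]=[a_0,\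 a_1\cdot\overline{b_1}\cdot m_{b_1(0)}\cdot b_1]$. A biquandle is a set $B$ with binary operations $\uparrow,\downarrow$, closed under them, such that: (1) for each $a$, $x\mapsto x\uparrow a$ and $x\mapsto x\downarrow a$ are bijections of $B$, and $S(x,y)=(y\downarrow x,\ x\uparrow y)$ is a bijection of $B\times B$; (2) with $f_a(x)=x\uparrow a$, $g_a(x)=x\downarrow a$: $f_a^{-1}(a)=a\downarrow f_a^{-1}(a)$ and $g_a^{-1}(a)=a\uparrow g_a^{-1}(a)$ for all $a$; (3) for all $a,b,c$: $(a\uparrow b)\uparrow c=(a\uparrow(c\downarrow b))\uparrow(b\uparrow c)$; $(a\downarrow b)\uparrow(c\downarrow(b\uparrow a))=(a\uparrow c)\downarrow(b\uparrow(c\downarrow a))$; $(a\downarrow b)\downarrow c=(a\downarrow(c\uparrow b))\downarrow(b\downarrow c)$. *)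

theory Defs
  imports "HOL-Analysis.Analysis"
begin

definition biquandle :: "'b set \<Rightarrow> ('b \<Rightarrow> 'b \<Rightarrow> 'b) \<Rightarrow> ('b \<Rightarrow> 'b \<Rightarrow> 'b) \<Rightarrow> bool" where
  "biquandle B up down \<longleftrightarrow>
     (\<forall>x\<in>B. \<forall>y\<in>B. up x y \<in> B \<and> down x y \<in> B) \<and>
     (\<forall>a\<in>B. bij_betw (\<lambda>x. up x a) B B \<and> bij_betw (\<lambda>x. down x a) B B) \<and>
     bij_betw (\<lambda>(x, y). (down y x, up x y)) (B \<times> B) (B \<times> B) \<and>
     (\<forall>a\<in>B. inv_into B (\<lambda>x. up x a) a = down a (inv_into B (\<lambda>x. up x a) a)) \<and>
     (\<forall>a\<in>B. inv_into B (\<lambda>x. down x a) a = up a (inv_into B (\<lambda>x. down x a) a)) \<and>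
     (\<forall>a\<in>B. \<forall>b\<in>B. \<forall>c\<in>B.
        up (up a b) c = up (up a (down c b)) (up b c) \<and>
        up (down a b) (down c (up b a)) = down (up a c) (up b (down c a)) \<and>
        down (down a b) c = down (down a (up c b)) (down b c))"

text \<open>A link with k components and a closed tubular neighbourhood N_L is given by a
  topological embedding phi of k copies of the solid torus S^1 x D^2 into S^3;
  the link is the image of the cores S^1 x {0}.\<close>

definition solid_tori :: "nat \<Rightarrow> (nat \<times> complex \<times> complex) set" where
  "solid_tori k = {(i, u, w). i < k \<and> cmod u = 1 \<and> cmod w \<le> 1}"

definition boundary_tori :: "nat \<Rightarrow> (nat \<times> complex \<times> complex) set" where
  "boundary_tori k = {(i, u, w). i < k \<and> cmod u = 1 \<and> cmod w = 1}"

definition link_of :: "(nat \<times> complex \<times> complex \<Rightarrow> real^4) \<Rightarrow> nat \<Rightarrow> (real^4) set" where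
  "link_of \<phi> k = \<phi> ` {(i, u, w). i < k \<and> cmod u = 1 \<and> w = 0}"

definition nbhd :: "(nat \<times> complex \<times> complex \<Rightarrow> real^4) \<Rightarrow> nat \<Rightarrow> (real^4) set" where
  "nbhd \<phi> k = \<phi> ` solid_tori k"

definition bd_nbhd :: "(nat \<times> complex \<times> complex \<Rightarrow> real^4) \<Rightarrow> nat \<Rightarrow> (real^4) set" where
  "bd_nbhd \<phi> k = \<phi> ` boundary_tori k"

definition exterior :: "(nat \<times> complex \<times> complex \<Rightarrow> real^4) \<Rightarrow> nat \<Rightarrow> (real^4) set" where
  "exterior \<phi> k = closure (sphere 0 1 - nbhd \<phi> k)"

definition meridian :: "(nat \<times> complex \<times> complex \<Rightarrow> real^4) \<Rightarrow> nat \<Rightarrow> real^4 \<Rightarrow> (real \<Rightarrow> real^4)" where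
  "meridian \<phi> k p = (case inv_into (solid_tori k) \<phi> p of
      (i, u, w) \<Rightarrow> (\<lambda>t. \<phi> (i, u, w * cis (2 * pi * t))))"

type_synonym path4 = "real \<Rightarrow> real^4"

definition BL :: "(real^4) set \<Rightarrow> (real^4) set \<Rightarrow> real^4 \<Rightarrow> real^4 \<Rightarrow> (path4 \<times> path4) set" where
  "BL E dN z0 z1 = {(a0, a1). path a0 \<and> path a1 \<and> path_image a0 \<subseteq> E \<and> path_image a1 \<subseteq> E \<and>
      pathstart a0 \<in> dN \<and> pathstart a0 = pathstart a1 \<and> pathfinish a0 = z0 \<and> pathfinish a1 = z1}"

definition BL_rel :: "(real^4) set \<Rightarrow> (real^4) set \<Rightarrow> real^4 \<Rightarrow> real^4 \<Rightarrow> ((path4 \<times> path4) \<times> (path4 \<times> path4)) set" where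
  "BL_rel E dN z0 z1 = {((a0, a1), (b0, b1)).
      (a0, a1) \<in> BL E dN z0 z1 \<and> (b0, b1) \<in> BL E dN z0 z1 \<and>
      homotopic_with_canon (\<lambda>H. H 0 = z0 \<and> H 1 = z1 \<and> H (1/2) \<in> dN) {0..1} E
        (reversepath a0 +++ a1) (reversepath b0 +++ b1)}"

definition BL_hat :: "(real^4) set \<Rightarrow> (real^4) set \<Rightarrow> real^4 \<Rightarrow> real^4 \<Rightarrow> (path4 \<times> path4) set set" where
  "BL_hat E dN z0 z1 = BL E dN z0 z1 // BL_rel E dN z0 z1"

definition BL_up :: "((path4 \<times> path4) \<times> (path4 \<times> path4)) set \<Rightarrow> (real^4 \<Rightarrow> path4)
    \<Rightarrow> (path4 \<times> path4) set \<Rightarrow> (path4 \<times> path4) set \<Rightarrow> (path4 \<times> path4) set" where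
  "BL_up R m X Y = (case SOME x. x \<in> X of (a0, a1) \<Rightarrow> case SOME y. y \<in> Y of (b0, b1) \<Rightarrow>
      R `` {(a0 +++ (reversepath b0 +++ (m (pathstart b0) +++ b0)), a1)})"

definition BL_down :: "((path4 \<times> path4) \<times> (path4 \<times> path4)) set \<Rightarrow> (real^4 \<Rightarrow> path4)
    \<Rightarrow> (path4 \<times> path4) set \<Rightarrow> (path4 \<times> path4) set \<Rightarrow> (path4 \<times> path4) set" where
  "BL_down R m X Y = (case SOME x. x \<in> X of (a0, a1) \<Rightarrow> case SOME y. y \<in> Y of (b0, b1) \<Rightarrow>
      R `` {(a0, a1 +++ (reversepath b1 +++ (m (pathstart b1) +++ b1)))})"

end

theory Submission
  imports Defs "HOL-Homology.Invariance_of_Domain"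
begin


lemma cmap_canon: "continuous_map (top_of_set S) (top_of_set T) f \<longleftrightarrow> continuous_on S f \<and> f ` S \<subseteq> T"
  by (simp add: continuous_map_in_subtopology image_subset_iff_funcset)

lemma SQ:
  fixes G :: "real \<times> real \<Rightarrow> 'a::topological_space"
  assumes cG: "continuous_on ({0..1} \<times> {0..1}) G" and GS: "G ` ({0..1} \<times> {0..1}) \<subseteq> S"
  shows "homotopic_paths S ((\<lambda>s. G (0,s)) +++ (\<lambda>t. G (t,1))) ((\<lambda>t. G (t,0)) +++ (\<lambda>s. G (1,s)))"
proof -
  let ?Q = "{0..1::real} \<times> {0..1::real}"
  define g1 where "g1 = linepath (0::real,0::real) (0,1) +++ linepath (0,1) (1,1)"
  define g2 where "g2 = linepath (0::real,0::real) (1,0) +++ linepath (1,0) (1,1)"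
  have cQ: "convex ?Q" by (simp add: convex_Times)
  have sub: "closed_segment a b \<subseteq> ?Q" if "a \<in> ?Q" "b \<in> ?Q" for a b
    using cQ that by (simp add: closed_segment_subset)
  have pi1: "path_image g1 \<subseteq> ?Q" unfolding g1_def
    by (intro subset_path_image_join; simp add: sub)
  have pi2: "path_image g2 \<subseteq> ?Q" unfolding g2_def
    by (intro subset_path_image_join; simp add: sub)
  have "homotopic_paths ?Q g1 g2"
  proof (rule homotopic_paths_linear)
    show "path g1" "path g2" unfolding g1_def g2_def by auto
    show "pathstart g2 = pathstart g1" "pathfinish g2 = pathfinish g1" unfolding g1_def g2_def by auto
    fix t :: real assume "t \<in> {0..1}"
    then have "g1 t \<in> ?Q" "g2 t \<in> ?Q" using pi1 pi2 unfolding path_image_def by auto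
    then show "closed_segment (g1 t) (g2 t) \<subseteq> ?Q" by (rule sub)
  qed
  then have "homotopic_paths S (G \<circ> g1) (G \<circ> g2)"
    by (rule homotopic_paths_continuous_image) (use cG GS in auto)
  moreover have "G \<circ> g1 = (\<lambda>s. G (0,s)) +++ (\<lambda>t. G (t,1))"
    unfolding g1_def path_compose_join by (simp add: o_def linepath_def)
  moreover have "G \<circ> g2 = (\<lambda>t. G (t,0)) +++ (\<lambda>s. G (1,s))"
    unfolding g2_def path_compose_join by (simp add: o_def linepath_def)
  ultimately show ?thesis by simp
qed

lemma hp_cong01:
  assumes "homotopic_paths S p q" "\<And>t. t \<in> {0..1} \<Longrightarrow> p t = p' t" "\<And>t. t \<in> {0..1} \<Longrightarrow> q t = q' t"
  shows "homotopic_paths S p' q'"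
proof -
  have "homotopic_paths S p' p"
    using assms homotopic_paths_imp_path homotopic_paths_imp_subset
    by (metis homotopic_paths_eq homotopic_paths_sym)
  moreover have "homotopic_paths S q q'"
    using assms homotopic_paths_imp_path homotopic_paths_imp_subset
    by (metis homotopic_paths_eq)
  ultimately show ?thesis using assms(1) by (meson homotopic_paths_trans)
qed

lemma join_cong01: "(\<And>t. t \<in> {0..1} \<Longrightarrow> p t = p' t) \<Longrightarrow> (\<And>t. t \<in> {0..1} \<Longrightarrow> q t = q' t) \<Longrightarrow> t \<in> {0..1::real}
   \<Longrightarrow> (p +++ q) t = (p' +++ q') t"
  by (auto simp: joinpaths_def)




locale lk =
  fixes E D :: "(real^4) set" and z0 z1 :: "real^4" and m :: "real^4 \<Rightarrow> real \<Rightarrow> real^4"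
  assumes DE: "D \<subseteq> E"
  and mpath: "\<And>p. p \<in> D \<Longrightarrow> path (m p)"
  and mimg: "\<And>p. p \<in> D \<Longrightarrow> path_image (m p) \<subseteq> D"
  and mstart: "\<And>p. p \<in> D \<Longrightarrow> pathstart (m p) = p"
  and mfin: "\<And>p. p \<in> D \<Longrightarrow> pathfinish (m p) = p"
  and MT: "\<And>d. path d \<Longrightarrow> path_image d \<subseteq> D \<Longrightarrow>
       homotopic_paths E (m (pathstart d)) (d +++ (m (pathfinish d) +++ reversepath d))"
begin

abbreviation "hp \<equiv> homotopic_paths E"
definition okp where "okp p \<longleftrightarrow> path p \<and> path_image p \<subseteq> E"

lemma okp_join[simp]: "okp p \<Longrightarrow> okp q \<Longrightarrow> pathfinish p = pathstart q \<Longrightarrow> okp (p +++ q)"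
  by (auto simp: okp_def path_image_join)
lemma okp_rev[simp]: "okp (reversepath p) = okp p"
  by (auto simp: okp_def)
lemma hp_okp: "hp p q \<Longrightarrow> okp p \<and> okp q"
  by (simp add: okp_def homotopic_paths_imp_path homotopic_paths_imp_subset)
lemma hp_ends: "hp p q \<Longrightarrow> pathstart p = pathstart q \<and> pathfinish p = pathfinish q"
  by (simp add: homotopic_paths_imp_pathstart homotopic_paths_imp_pathfinish)
lemma hp_refl: "okp p \<Longrightarrow> hp p p" by (simp add: okp_def)
lemma hp_sym: "hp p q \<Longrightarrow> hp q p" by (rule homotopic_paths_sym)
lemma hp_join: "hp p p' \<Longrightarrow> hp q q' \<Longrightarrow> pathfinish p = pathstart q \<Longrightarrow> hp (p +++ q) (p' +++ q')"
  by (rule homotopic_paths_join)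
lemma hp_joinl: "hp p p' \<Longrightarrow> okp q \<Longrightarrow> pathfinish p = pathstart q \<Longrightarrow> hp (p +++ q) (p' +++ q)"
  using hp_join hp_refl by blast
lemma hp_joinr: "okp p \<Longrightarrow> hp q q' \<Longrightarrow> pathfinish p = pathstart q \<Longrightarrow> hp (p +++ q) (p +++ q')"
  using hp_join hp_refl by blast
lemma hp_rev: "hp p q \<Longrightarrow> hp (reversepath p) (reversepath q)"
  by (simp add: homotopic_paths_reversepath)
lemma A1: "okp p \<Longrightarrow> okp q \<Longrightarrow> okp r \<Longrightarrow> pathfinish p = pathstart q \<Longrightarrow> pathfinish q = pathstart r \<Longrightarrow>
   hp (p +++ (q +++ r)) ((p +++ q) +++ r)"
  by (simp add: okp_def homotopic_paths_assoc)
lemma A2: "okp p \<Longrightarrow> okp q \<Longrightarrow> okp r \<Longrightarrow> pathfinish p = pathstart q \<Longrightarrow> pathfinish q = pathstart r \<Longrightarrow>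
   hp ((p +++ q) +++ r) (p +++ (q +++ r))"
  by (simp add: A1 hp_sym)
lemma LID: "okp p \<Longrightarrow> hp (linepath (pathstart p) (pathstart p) +++ p) p"
  by (simp add: okp_def homotopic_paths_lid)
lemma RID: "okp p \<Longrightarrow> hp (p +++ linepath (pathfinish p) (pathfinish p)) p"
  by (simp add: okp_def homotopic_paths_rid)
lemma C1: assumes "okp p" "okp q" "pathfinish p = pathstart q" shows "hp (reversepath p +++ (p +++ q)) q"
proof -
  have "hp (reversepath p +++ (p +++ q)) ((reversepath p +++ p) +++ q)" using assms by (simp add: A1)
  also have "hp ((reversepath p +++ p) +++ q) (linepath (pathstart q) (pathstart q) +++ q)"
    using assms by (intro hp_joinl) (auto simp: okp_def dest: homotopic_paths_linv)
  also have "hp (linepath (pathstart q) (pathstart q) +++ q) q" using assms by (simp add: LID)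
  finally show ?thesis .
qed
lemma C2: assumes "okp p" "okp q" "pathstart p = pathstart q" shows "hp (p +++ (reversepath p +++ q)) q"
  using C1[of "reversepath p" q] assms by simp
lemma C3: assumes "okp p" "okp q" "pathfinish q = pathstart p" shows "hp ((q +++ p) +++ reversepath p) q"
proof -
  have "hp ((q +++ p) +++ reversepath p) (q +++ (p +++ reversepath p))" using assms by (simp add: A2)
  also have "hp (q +++ (p +++ reversepath p)) (q +++ linepath (pathfinish q) (pathfinish q))"
    using assms by (intro hp_joinr) (auto simp: okp_def homotopic_paths_rinv)
  also have "hp (q +++ linepath (pathfinish q) (pathfinish q)) q" using assms RID[of q] by simp
  finally show ?thesis .
qed
lemma C4: assumes "okp p" "okp q" "pathfinish q = pathfinish p" shows "hp ((q +++ reversepath p) +++ p) q"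
  using C3[of "reversepath p" q] assms by simp

lemma okm[simp]: "p \<in> D \<Longrightarrow> okp (m p)"
  using mpath mimg DE by (auto simp: okp_def)

abbreviation "B \<equiv> BL E D z0 z1"
abbreviation "R \<equiv> BL_rel E D z0 z1"
definition "Pm (H :: real \<Rightarrow> real^4) \<longleftrightarrow> H 0 = z0 \<and> H 1 = z1 \<and> H (1/2) \<in> D"
abbreviation "HM \<equiv> homotopic_with_canon Pm {0..1} E"

lemma R_iff: "(x, y) \<in> R \<longleftrightarrow> x \<in> B \<and> y \<in> B \<and> HM (reversepath (fst x) +++ snd x) (reversepath (fst y) +++ snd y)"
  by (cases x; cases y) (simp add: BL_rel_def Pm_def[abs_def])

lemma B_iff: "x \<in> B \<longleftrightarrow> okp (fst x) \<and> okp (snd x) \<and> pathstart (fst x) \<in> D \<and>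
   pathstart (fst x) = pathstart (snd x) \<and> pathfinish (fst x) = z0 \<and> pathfinish (snd x) = z1"
  by (cases x) (auto simp: BL_def okp_def)

lemma HM_join:
  assumes "hp p p'" "hp q q'" "pathfinish p = pathstart q" "pathstart p = z0" "pathfinish q = z1"
    "pathfinish p \<in> D"
  shows "HM (p +++ q) (p' +++ q')"
  using assms
  apply (clarsimp simp: homotopic_paths_def homotopic_with_def Pm_def)
  apply (rename_tac k1 k2)
  apply (rule_tac x="(\<lambda>y. ((k1 \<circ> Pair (fst y)) +++ (k2 \<circ> Pair (fst y))) (snd y))" in exI)
  apply (intro conjI continuous_intros continuous_on_homotopic_join_lemma; force simp: joinpaths_def pathstart_def pathfinish_def path_image_def)
  done

end


context lk begin

lemma Pm_string: "x \<in> B \<Longrightarrow> Pm (reversepath (fst x) +++ snd x)"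
  by (auto simp: B_iff Pm_def joinpaths_def reversepath_def pathstart_def pathfinish_def)

lemma okp_string: "x \<in> B \<Longrightarrow> okp (reversepath (fst x) +++ snd x)"
  by (auto simp: B_iff)

lemma equivR: "equiv B R"
proof (rule equivI)
  show "R \<subseteq> B \<times> B" by (auto simp: R_iff)
  show "refl_on B R"
  proof (rule refl_onI)
    fix x assume x: "x \<in> B"
    then show "(x, x) \<in> R"
      using Pm_string[OF x] okp_string[OF x]
      by (auto simp: R_iff cmap_canon okp_def path_def path_image_def)
  qed
  show "sym R"
    by (rule symI) (auto simp: R_iff intro: homotopic_with_symD)
  show "trans R"
    by (rule transI) (auto simp: R_iff intro: homotopic_with_trans)
qed

lemma aff01: "0 \<le> a \<Longrightarrow> a \<le> 1 \<Longrightarrow> 0 \<le> b \<Longrightarrow> b \<le> 1 \<Longrightarrow> 0 \<le> (1-a)*b + a \<and> (1-a)*b + a \<le> (1::real)"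
proof -
  assume "0 \<le> a" "a \<le> 1" "0 \<le> b" "b \<le> 1"
  moreover have "(1-a)*b \<le> (1-a)" using mult_left_le[of b "1-a"] calculation by simp
  moreover have "0 \<le> (1-a)*b" using calculation by simp
  ultimately show ?thesis by linarith
qed

lemma SLIDE:
  assumes d: "path d" "path_image d \<subseteq> D" and b0: "okp b0" and b1: "okp b1"
    and s0: "pathstart b0 = pathfinish d" and s1: "pathstart b1 = pathfinish d"
    and f0: "pathfinish b0 = z0" and f1: "pathfinish b1 = z1"
  shows "HM (reversepath (d +++ b0) +++ (d +++ b1))
            (reversepath (linepath (pathfinish d) (pathfinish d) +++ b0) +++ (linepath (pathfinish d) (pathfinish d) +++ b1))"
proof -
  let ?A = "{0..1::real} \<times> {0..1::real}"
  have contd: "continuous_on {0..1} d" using d by (simp add: path_def)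
  have c1: "continuous_on ?A (\<lambda>y. subpath (fst y) 1 d (snd y))"
    unfolding subpath_def
    by (rule continuous_on_compose2[OF contd])
       (auto intro!: continuous_on_add continuous_on_mult continuous_on_diff continuous_on_const continuous_on_fst continuous_on_snd continuous_on_id dest: aff01)
  have cb0: "continuous_on ?A (\<lambda>y. b0 (snd y))"
    using b0 unfolding okp_def path_def
    by (rule continuous_on_compose2[of "{0..1}" b0 _ snd, OF conjunct1]) (auto simp: continuous_on_snd)
  have cb1: "continuous_on ?A (\<lambda>y. b1 (snd y))"
    using b1 unfolding okp_def path_def
    by (rule continuous_on_compose2[of "{0..1}" b1 _ snd, OF conjunct1]) (auto simp: continuous_on_snd)
  have K0: "continuous_on ?A (\<lambda>y. (subpath (fst y) 1 d +++ b0) (snd y))"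
    by (rule continuous_on_homotopic_join_lemma[OF c1 cb0]) (use s0 in \<open>simp add: pathfinish_def pathstart_def subpath_def reversepath_def\<close>)
  have K1: "continuous_on ?A (\<lambda>y. (subpath (fst y) 1 d +++ b1) (snd y))"
    by (rule continuous_on_homotopic_join_lemma[OF c1 cb1]) (use s1 in \<open>simp add: pathfinish_def pathstart_def subpath_def reversepath_def\<close>)
  have K0': "continuous_on ?A (\<lambda>y. reversepath (subpath (fst y) 1 d +++ b0) (snd y))"
    unfolding reversepath_def
    by (rule continuous_on_compose2[OF K0, of _ "\<lambda>y. (fst y, 1 - snd y)", simplified])
       (auto intro!: continuous_on_Pair continuous_on_diff continuous_on_const continuous_on_fst continuous_on_snd continuous_on_id)
  define h where "h = (\<lambda>y. (reversepath (subpath (fst y) 1 d +++ b0) +++ (subpath (fst y) 1 d +++ b1)) (snd y))"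
  have ch: "continuous_on ?A h"
    unfolding h_def
    by (rule continuous_on_homotopic_join_lemma[OF K0' K1]) (use s0 in \<open>simp add: pathfinish_def pathstart_def subpath_def reversepath_def joinpaths_def\<close>)
  have okd: "okp (subpath t 1 d)" if "t \<in> {0..1}" for t
    using d that DE path_image_subpath_subset[of t 1 d] by (auto simp: okp_def)
  have hE: "h (t, s) \<in> E" if "t \<in> {0..1}" "s \<in> {0..1}" for t s
  proof -
    have "okp (reversepath (subpath t 1 d +++ b0) +++ (subpath t 1 d +++ b1))"
    proof -
      have j0: "okp (subpath t 1 d +++ b0)" using okd[OF that(1)] b0 s0 by (intro okp_join) (auto simp: pathfinish_def subpath_def)
      have j1: "okp (subpath t 1 d +++ b1)" using okd[OF that(1)] b1 s1 by (intro okp_join) (auto simp: pathfinish_def subpath_def)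
      show ?thesis by (rule okp_join) (use j0 j1 in auto)
    qed
    then show ?thesis using that unfolding okp_def h_def path_image_def by auto
  qed
  show ?thesis
    unfolding homotopic_with_def
  proof (intro exI conjI allI ballI)
    show "continuous_map (prod_topology (top_of_set {0..1}) (top_of_set {0..1})) (top_of_set E) h"
      using ch hE by (auto simp: cmap_canon)
    show "h (0, x) = (reversepath (d +++ b0) +++ (d +++ b1)) x" for x
      by (simp add: h_def)
    show "h (1, x) = (reversepath (linepath (pathfinish d) (pathfinish d) +++ b0) +++ (linepath (pathfinish d) (pathfinish d) +++ b1)) x" for x
      by (simp add: h_def subpath_def linepath_refl pathfinish_def)
    fix t :: real assume t: "t \<in> {0..1}"
    have e0: "h (t, 0) = pathfinish b0" by (simp add: h_def joinpaths_def reversepath_def pathfinish_def)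
    have e1: "h (t, 1) = pathfinish b1" by (simp add: h_def joinpaths_def reversepath_def pathfinish_def)
    have e2: "h (t, 1/2) = d t" by (simp add: h_def joinpaths_def reversepath_def subpath_def)
    have "d t \<in> D" using t d(2) by (auto simp: path_image_def)
    then show "Pm (\<lambda>x. h (t, x))"
      using e0 e1 e2 f0 f1 unfolding Pm_def by simp
  qed
qed

end


context lk begin

lemma BR2:
  assumes x: "x \<in> B" and y: "y \<in> B" and d: "path d" "path_image d \<subseteq> D"
    and ds: "pathstart d = pathstart (fst x)" and df: "pathfinish d = pathstart (fst y)"
    and h0: "hp (fst x) (d +++ fst y)" and h1: "hp (snd x) (d +++ snd y)"
  shows "(x, y) \<in> R"
proof -
  obtain a0 a1 where xa: "x = (a0, a1)" by (cases x)
  obtain b0 b1 where yb: "y = (b0, b1)" by (cases y)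
  have xa': "okp a0" "okp a1" "pathstart a0 \<in> D" "pathstart a0 = pathstart a1" "pathfinish a0 = z0" "pathfinish a1 = z1"
    using x by (auto simp: xa B_iff)
  have yb': "okp b0" "okp b1" "pathstart b0 \<in> D" "pathstart b0 = pathstart b1" "pathfinish b0 = z0" "pathfinish b1 = z1"
    using y by (auto simp: yb B_iff)
  have dok: "okp d" using d DE by (auto simp: okp_def)
  let ?e = "pathfinish d"
  have 1: "HM (reversepath a0 +++ a1) (reversepath (d +++ b0) +++ (d +++ b1))"
    by (rule HM_join) (use h0 h1 xa' in \<open>auto simp: xa yb intro: hp_rev\<close>)
  have 2: "HM (reversepath (d +++ b0) +++ (d +++ b1))
           (reversepath (linepath ?e ?e +++ b0) +++ (linepath ?e ?e +++ b1))"
    by (rule SLIDE) (use d yb' df in \<open>auto simp: yb\<close>)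
  have 3: "HM (reversepath (linepath ?e ?e +++ b0) +++ (linepath ?e ?e +++ b1)) (reversepath b0 +++ b1)"
  proof (rule HM_join)
    show "hp (reversepath (linepath ?e ?e +++ b0)) (reversepath b0)"
      using LID[of b0] yb' df by (auto simp: yb intro: hp_rev)
    show "hp (linepath ?e ?e +++ b1) b1"
      using LID[of b1] yb' df by (auto simp: yb)
  qed (use yb' df in \<open>auto simp: yb\<close>)
  have "HM (reversepath a0 +++ a1) (reversepath b0 +++ b1)"
    using 1 2 3 by (meson homotopic_with_trans)
  then show ?thesis using x y by (simp add: R_iff xa yb)
qed

end





context lk begin

lemma HM_iff: "HM f g \<longleftrightarrow> (\<exists>h :: real \<times> real \<Rightarrow> real^4. continuous_on ({0..1} \<times> {0..1}) h \<and> h ` ({0..1} \<times> {0..1}) \<subseteq> E \<and>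
     (\<forall>x\<in>{0..1}. h (0, x) = f x) \<and> (\<forall>x\<in>{0..1}. h (1, x) = g x) \<and> (\<forall>t\<in>{0..1}. Pm (\<lambda>x. h (t, x))))"
  by (subst homotopic_with) (auto simp: Pm_def image_subset_iff_funcset)

lemma half1: "x \<in> B \<Longrightarrow> s \<in> {0..1} \<Longrightarrow> (reversepath (fst x) +++ snd x) (s/2) = reversepath (fst x) s"
  by (auto simp: joinpaths_def)
lemma half2: "x \<in> B \<Longrightarrow> s \<in> {0..1} \<Longrightarrow> (reversepath (fst x) +++ snd x) (1/2 + s/2) = snd x s"
  by (auto simp: joinpaths_def B_iff reversepath_def pathstart_def algebra_simps)

lemma BR1:
  assumes "(x, y) \<in> R"
  shows "\<exists>d. path d \<and> path_image d \<subseteq> D \<and> pathstart d = pathstart (fst x) \<and> pathfinish d = pathstart (fst y) \<and>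
     hp (fst x) (d +++ fst y) \<and> hp (snd x) (d +++ snd y)"
proof -
  have x: "x \<in> B" and y: "y \<in> B" using assms by (auto simp: R_iff)
  obtain a0 a1 where xa: "x = (a0, a1)" by (cases x)
  obtain b0 b1 where yb: "y = (b0, b1)" by (cases y)
  have xa': "okp a0" "okp a1" "pathstart a0 \<in> D" "pathstart a0 = pathstart a1" "pathfinish a0 = z0" "pathfinish a1 = z1"
    using x by (auto simp: xa B_iff)
  have yb': "okp b0" "okp b1" "pathstart b0 \<in> D" "pathstart b0 = pathstart b1" "pathfinish b0 = z0" "pathfinish b1 = z1"
    using y by (auto simp: yb B_iff)
  let ?Q = "{0..1::real} \<times> {0..1::real}"
  obtain h where ch: "continuous_on ?Q h" and hE: "h ` ?Q \<subseteq> E"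
    and h0: "\<And>s. s \<in> {0..1} \<Longrightarrow> h (0, s) = (reversepath a0 +++ a1) s"
    and h1: "\<And>s. s \<in> {0..1} \<Longrightarrow> h (1, s) = (reversepath b0 +++ b1) s"
    and hP: "\<And>t. t \<in> {0..1} \<Longrightarrow> Pm (\<lambda>s. h (t, s))"
  proof -
    have "HM (reversepath a0 +++ a1) (reversepath b0 +++ b1)" using assms by (simp add: R_iff xa yb)
    then show ?thesis using that unfolding HM_iff by blast
  qed
  define d where "d = (\<lambda>t. h (t, 1/2))"
  have pd: "path d"
  proof -
    have "continuous_on {0..1} (\<lambda>t::real. (t, 1/2::real))" by (intro continuous_intros)
    moreover have "(\<lambda>t::real. (t, 1/2::real)) ` {0..1} \<subseteq> ?Q" by auto
    ultimately show ?thesis unfolding d_def path_def by (rule continuous_on_compose2[OF ch])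
  qed
  have dD: "path_image d \<subseteq> D" using hP by (auto simp: d_def path_image_def Pm_def)
  have ds: "pathstart d = pathstart a0"
    using h0[of "1/2"] by (simp add: d_def pathstart_def joinpaths_def reversepath_def)
  have df: "pathfinish d = pathstart b0"
    using h1[of "1/2"] by (simp add: d_def pathfinish_def pathstart_def joinpaths_def reversepath_def)
  have dok: "okp d" using pd dD DE by (auto simp: okp_def)
  define G0 where "G0 = (\<lambda>y. h (fst y, snd y / 2))"
  have cG0: "continuous_on ?Q G0"
  proof -
    have "continuous_on ?Q (\<lambda>y::real\<times>real. (fst y, snd y / 2))" by (intro continuous_intros) auto
    moreover have "(\<lambda>y::real\<times>real. (fst y, snd y / 2)) ` ?Q \<subseteq> ?Q" by auto
    ultimately show ?thesis unfolding G0_def by (rule continuous_on_compose2[OF ch])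
  qed
  have G0E: "G0 ` ?Q \<subseteq> E" unfolding G0_def using hE by auto
  have sq0: "hp ((\<lambda>s. G0 (0,s)) +++ (\<lambda>t. G0 (t,1))) ((\<lambda>t. G0 (t,0)) +++ (\<lambda>s. G0 (1,s)))"
    by (rule SQ[OF cG0 G0E])
  have "hp (reversepath a0 +++ d) (linepath z0 z0 +++ reversepath b0)"
  proof (rule hp_cong01[OF sq0])
    fix t :: real assume t: "t \<in> {0..1}"
    show "((\<lambda>s. G0 (0,s)) +++ (\<lambda>t. G0 (t,1))) t = (reversepath a0 +++ d) t"
    proof (rule join_cong01[OF _ _ t])
      fix s :: real assume s: "s \<in> {0..1}"
      show "G0 (0,s) = reversepath a0 s" using h0[of "s/2"] s half1[OF x s] by (simp add: G0_def xa)
      show "G0 (s,1) = d s" by (simp add: G0_def d_def)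
    qed
    show "((\<lambda>t. G0 (t,0)) +++ (\<lambda>s. G0 (1,s))) t = (linepath z0 z0 +++ reversepath b0) t"
    proof (rule join_cong01[OF _ _ t])
      fix s :: real assume s: "s \<in> {0..1}"
      show "G0 (s,0) = linepath z0 z0 s" using hP[OF s] by (simp add: G0_def Pm_def linepath_refl)
      show "G0 (1,s) = reversepath b0 s" using h1[of "s/2"] s half1[OF y s] by (simp add: G0_def yb)
    qed
  qed
  also have "hp (linepath z0 z0 +++ reversepath b0) (reversepath b0)"
    using LID[of "reversepath b0"] yb' by simp
  finally have "hp (reversepath (reversepath a0 +++ d)) (reversepath (reversepath b0))"
    by (rule hp_rev)
  then have r0: "hp (reversepath d +++ a0) b0"
    using ds by (simp add: reversepath_joinpaths)
  have "hp a0 (d +++ (reversepath d +++ a0))"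
    using C2[of d a0] dok xa' ds by (simp add: hp_sym)
  also have "hp (d +++ (reversepath d +++ a0)) (d +++ b0)"
    using r0 dok ds by (intro hp_joinr) auto
  finally have fin0: "hp a0 (d +++ b0)" .
  define G1 where "G1 = (\<lambda>y. h (fst y, 1/2 + snd y / 2))"
  have cG1: "continuous_on ?Q G1"
  proof -
    have "continuous_on ?Q (\<lambda>y::real\<times>real. (fst y, 1/2 + snd y / 2))" by (intro continuous_intros) auto
    moreover have "(\<lambda>y::real\<times>real. (fst y, 1/2 + snd y / 2)) ` ?Q \<subseteq> ?Q" by auto
    ultimately show ?thesis unfolding G1_def by (rule continuous_on_compose2[OF ch])
  qed
  have G1E: "G1 ` ?Q \<subseteq> E" unfolding G1_def using hE by auto
  have sq1: "hp ((\<lambda>s. G1 (0,s)) +++ (\<lambda>t. G1 (t,1))) ((\<lambda>t. G1 (t,0)) +++ (\<lambda>s. G1 (1,s)))"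
    by (rule SQ[OF cG1 G1E])
  have "hp (a1 +++ linepath z1 z1) (d +++ b1)"
  proof (rule hp_cong01[OF sq1])
    fix t :: real assume t: "t \<in> {0..1}"
    show "((\<lambda>s. G1 (0,s)) +++ (\<lambda>t. G1 (t,1))) t = (a1 +++ linepath z1 z1) t"
    proof (rule join_cong01[OF _ _ t])
      fix s :: real assume s: "s \<in> {0..1}"
      show "G1 (0,s) = a1 s" using h0[of "1/2 + s/2"] s half2[OF x s] by (simp add: G1_def xa)
      show "G1 (s,1) = linepath z1 z1 s" using hP[OF s] by (simp add: G1_def Pm_def linepath_refl)
    qed
    show "((\<lambda>t. G1 (t,0)) +++ (\<lambda>s. G1 (1,s))) t = (d +++ b1) t"
    proof (rule join_cong01[OF _ _ t])
      fix s :: real assume s: "s \<in> {0..1}"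
      show "G1 (s,0) = d s" by (simp add: G1_def d_def)
      show "G1 (1,s) = b1 s" using h1[of "1/2 + s/2"] s half2[OF y s] by (simp add: G1_def yb)
    qed
  qed
  then have fin1: "hp a1 (d +++ b1)"
    using RID[of a1] xa' by (metis hp_sym homotopic_paths_trans)
  show ?thesis
    using pd dD ds df fin0 fin1 by (auto simp: xa yb)
qed

end


context lk begin

definition "L0 y = reversepath (fst y) +++ (m (pathstart (fst y)) +++ fst y)"
definition "L1 y = reversepath (snd y) +++ (m (pathstart (snd y)) +++ snd y)"
definition "opU x l = (fst x +++ l, snd x)"
definition "opD x l = (fst x, snd x +++ l)"
definition "loopat z l \<longleftrightarrow> okp l \<and> pathstart l = z \<and> pathfinish l = z"

lemma L0_opD[simp]: "L0 (opD y l) = L0 y" by (simp add: L0_def opD_def)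
lemma L1_opU[simp]: "L1 (opU y l) = L1 y" by (simp add: L1_def opU_def)
lemma opUD: "opU (opD x l) l' = opD (opU x l') l" by (simp add: opU_def opD_def)

lemma Lgen: "okp b \<Longrightarrow> pathstart b \<in> D \<Longrightarrow> pathfinish b = z \<Longrightarrow>
   loopat z (reversepath b +++ (m (pathstart b) +++ b))"
  by (auto simp: loopat_def mstart mfin)

lemma L0_loop: "y \<in> B \<Longrightarrow> loopat z0 (L0 y)"
  unfolding L0_def by (rule Lgen) (auto simp: B_iff)
lemma B_snd: "y \<in> B \<Longrightarrow> okp (snd y) \<and> pathstart (snd y) \<in> D \<and> pathfinish (snd y) = z1"
  unfolding B_iff by (intro conjI; elim conjE; simp)
lemma L1_loop: "y \<in> B \<Longrightarrow> loopat z1 (L1 y)"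
  unfolding L1_def by (rule Lgen) (use B_snd[of y] in auto)

lemma loop_rev: "loopat z l \<Longrightarrow> loopat z (reversepath l)"
  by (auto simp: loopat_def)

lemma opU_B: "x \<in> B \<Longrightarrow> loopat z0 l \<Longrightarrow> opU x l \<in> B"
  unfolding B_iff opU_def loopat_def by (intro conjI; elim conjE; simp)
lemma opD_B: "x \<in> B \<Longrightarrow> loopat z1 l \<Longrightarrow> opD x l \<in> B"
  unfolding B_iff opD_def loopat_def by (intro conjI; elim conjE; simp)

lemma REL_HOM:
  assumes x: "x \<in> B" and y: "y \<in> B" and h0: "hp (fst x) (fst y)" and h1: "hp (snd x) (snd y)"
  shows "(x, y) \<in> R"
proof -
  let ?p = "pathstart (fst x)"
  have pD: "?p \<in> D" using x unfolding B_iff by blast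
  have s: "pathstart (fst y) = ?p" "pathstart (snd y) = ?p" "pathstart (snd x) = ?p"
  proof -
    have sx: "pathstart (snd x) = ?p" using x unfolding B_iff by metis
    show "pathstart (fst y) = ?p" "pathstart (snd y) = ?p" "pathstart (snd x) = ?p"
      using hp_ends[OF h0] hp_ends[OF h1] sx by metis+
  qed
  show ?thesis
  proof (rule BR2[OF x y, of "linepath ?p ?p"])
    show "path (linepath ?p ?p)" by simp
    show "path_image (linepath ?p ?p) \<subseteq> D" using pD by simp
    show "pathstart (linepath ?p ?p) = ?p" "pathfinish (linepath ?p ?p) = pathstart (fst y)" using s by auto
    show "hp (fst x) (linepath ?p ?p +++ fst y)"
    proof -
      have "hp (fst y) (linepath ?p ?p +++ fst y)" using LID[of "fst y"] s hp_okp[OF h0] by (simp add: hp_sym)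
      then show ?thesis using h0 by (rule homotopic_paths_trans[rotated])
    qed
    show "hp (snd x) (linepath ?p ?p +++ snd y)"
    proof -
      have "hp (snd y) (linepath ?p ?p +++ snd y)" using LID[of "snd y"] s hp_okp[OF h1] by (simp add: hp_sym)
      then show ?thesis using h1 by (rule homotopic_paths_trans[rotated])
    qed
  qed
qed

lemma CONJ:
  assumes b: "okp b" "okp b'" and d: "okp d" and l: "okp l" "okp l'"
    and hb: "hp b (d +++ b')" and hl: "hp l (d +++ (l' +++ reversepath d))"
    and e1: "pathfinish l = pathstart b" and e2: "pathstart l' = pathstart b'" and e3: "pathfinish l' = pathstart b'"
    and e4: "pathfinish d = pathstart b'"
  shows "hp (reversepath b +++ (l +++ b)) (reversepath b' +++ (l' +++ b'))"
proof -
  have sb: "pathstart b = pathstart d" using hp_ends[OF hb] by simp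
  have sl: "pathstart l = pathstart d" using hp_ends[OF hl] by simp
  have "hp (reversepath b +++ (l +++ b))
      (reversepath (d +++ b') +++ ((d +++ (l' +++ reversepath d)) +++ (d +++ b')))"
    by (intro hp_join hp_rev hb hl) (use e1 sb sl in auto)
  also have "reversepath (d +++ b') = reversepath b' +++ reversepath d"
    using e4 by (simp add: reversepath_joinpaths)
  also have "hp ((reversepath b' +++ reversepath d) +++ ((d +++ (l' +++ reversepath d)) +++ (d +++ b')))
     (reversepath b' +++ (reversepath d +++ ((d +++ (l' +++ reversepath d)) +++ (d +++ b'))))"
    by (rule A2) (use b d l e2 e3 e4 in auto)
  also have "hp (reversepath b' +++ (reversepath d +++ ((d +++ (l' +++ reversepath d)) +++ (d +++ b'))))
     (reversepath b' +++ (l' +++ b'))"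
  proof (rule hp_joinr)
    have "hp (reversepath d +++ ((d +++ (l' +++ reversepath d)) +++ (d +++ b')))
             ((reversepath d +++ (d +++ (l' +++ reversepath d))) +++ (d +++ b'))"
      by (rule A1) (use b d l e2 e3 e4 in auto)
    also have "hp ((reversepath d +++ (d +++ (l' +++ reversepath d))) +++ (d +++ b'))
             ((l' +++ reversepath d) +++ (d +++ b'))"
      by (rule hp_joinl[OF C1]) (use b d l e2 e3 e4 in auto)
    also have "hp ((l' +++ reversepath d) +++ (d +++ b')) (l' +++ (reversepath d +++ (d +++ b')))"
      by (rule A2) (use b d l e2 e3 e4 in auto)
    also have "hp (l' +++ (reversepath d +++ (d +++ b'))) (l' +++ b')"
      by (rule hp_joinr[OF _ C1]) (use b d l e2 e3 e4 in auto)
    finally show "hp (reversepath d +++ ((d +++ (l' +++ reversepath d)) +++ (d +++ b'))) (l' +++ b')" .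
  qed (use b e2 e4 in auto)
  finally show ?thesis .
qed

end


context lk begin

lemma B_fst: "y \<in> B \<Longrightarrow> okp (fst y) \<and> pathstart (fst y) \<in> D \<and> pathfinish (fst y) = z0"
  unfolding B_iff by (intro conjI; elim conjE; simp)
lemma B_ss: "y \<in> B \<Longrightarrow> pathstart (snd y) = pathstart (fst y)"
  unfolding B_iff by metis

lemma okd: "path d \<Longrightarrow> path_image d \<subseteq> D \<Longrightarrow> okp d"
  using DE by (auto simp: okp_def)

lemma W0:
  assumes "(y, y') \<in> R"
  shows "hp (L0 y) (L0 y') \<and> hp (L1 y) (L1 y')"
proof -
  have y: "y \<in> B" and y': "y' \<in> B" using assms by (auto simp: R_iff)
  obtain d where d: "path d" "path_image d \<subseteq> D" and ds: "pathstart d = pathstart (fst y)"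
    and df: "pathfinish d = pathstart (fst y')" and h0: "hp (fst y) (d +++ fst y')" and h1: "hp (snd y) (d +++ snd y')"
    using BR1[OF assms] by blast
  have dok: "okp d" by (rule okd[OF d])
  have mt: "hp (m (pathstart d)) (d +++ (m (pathfinish d) +++ reversepath d))" by (rule MT[OF d])
  note f = B_fst[OF y] B_fst[OF y'] B_snd[OF y] B_snd[OF y'] B_ss[OF y] B_ss[OF y']
  have "hp (L0 y) (L0 y')" unfolding L0_def
    by (rule CONJ[OF _ _ dok _ _ h0]) (use f mt ds df in \<open>auto simp: mstart mfin\<close>)
  moreover have "hp (L1 y) (L1 y')" unfolding L1_def
    by (rule CONJ[OF _ _ dok _ _ h1]) (use f mt ds df in \<open>auto simp: mstart mfin\<close>)
  ultimately show ?thesis ..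
qed

lemma W1:
  assumes xr: "(x, x') \<in> R" and l: "loopat z0 l" and hl: "hp l l'"
  shows "(opU x l, opU x' l') \<in> R"
proof -
  have x: "x \<in> B" and x': "x' \<in> B" using xr by (auto simp: R_iff)
  obtain d where d: "path d" "path_image d \<subseteq> D" and ds: "pathstart d = pathstart (fst x)"
    and df: "pathfinish d = pathstart (fst x')" and h0: "hp (fst x) (d +++ fst x')" and h1: "hp (snd x) (d +++ snd x')"
    using BR1[OF xr] by blast
  have l': "loopat z0 l'" using l hp_ends[OF hl] hp_okp[OF hl] by (auto simp: loopat_def)
  note f = B_fst[OF x] B_fst[OF x']
  have dok: "okp d" by (rule okd[OF d])
  show ?thesis
  proof (rule BR2[OF opU_B[OF x l] opU_B[OF x' l'] d])
    show "pathstart d = pathstart (fst (opU x l))" "pathfinish d = pathstart (fst (opU x' l'))"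
      using ds df by (auto simp: opU_def)
    have "hp (fst x +++ l) ((d +++ fst x') +++ l')"
      by (rule hp_join[OF h0 hl]) (use f l in \<open>auto simp: loopat_def\<close>)
    also have "hp ((d +++ fst x') +++ l') (d +++ (fst x' +++ l'))"
      by (rule A2) (use f l' dok df in \<open>auto simp: loopat_def\<close>)
    finally show "hp (fst (opU x l)) (d +++ fst (opU x' l'))" by (simp add: opU_def)
    show "hp (snd (opU x l)) (d +++ snd (opU x' l'))" using h1 by (simp add: opU_def)
  qed
qed

lemma W1D:
  assumes xr: "(x, x') \<in> R" and l: "loopat z1 l" and hl: "hp l l'"
  shows "(opD x l, opD x' l') \<in> R"
proof -
  have x: "x \<in> B" and x': "x' \<in> B" using xr by (auto simp: R_iff)
  obtain d where d: "path d" "path_image d \<subseteq> D" and ds: "pathstart d = pathstart (fst x)"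
    and df: "pathfinish d = pathstart (fst x')" and h0: "hp (fst x) (d +++ fst x')" and h1: "hp (snd x) (d +++ snd x')"
    using BR1[OF xr] by blast
  have l': "loopat z1 l'" using l hp_ends[OF hl] hp_okp[OF hl] by (auto simp: loopat_def)
  note f = B_snd[OF x] B_snd[OF x'] B_ss[OF x'] 
  have dok: "okp d" by (rule okd[OF d])
  show ?thesis
  proof (rule BR2[OF opD_B[OF x l] opD_B[OF x' l'] d])
    show "pathstart d = pathstart (fst (opD x l))" "pathfinish d = pathstart (fst (opD x' l'))"
      using ds df by (auto simp: opD_def)
    have "hp (snd x +++ l) ((d +++ snd x') +++ l')"
      by (rule hp_join[OF h1 hl]) (use f l in \<open>auto simp: loopat_def\<close>)
    also have "hp ((d +++ snd x') +++ l') (d +++ (snd x' +++ l'))"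
      by (rule A2) (use f l' dok df in \<open>auto simp: loopat_def\<close>)
    finally show "hp (snd (opD x l)) (d +++ snd (opD x' l'))" by (simp add: opD_def)
    show "hp (fst (opD x l)) (d +++ fst (opD x' l'))" using h0 by (simp add: opD_def)
  qed
qed

lemma LOP:
  assumes b: "okp b" and l: "okp l" and e: "pathfinish b = pathstart l" and M: "okp M"
    and eM: "pathstart M = pathstart b" "pathfinish M = pathstart b"
  shows "hp (reversepath (b +++ l) +++ (M +++ (b +++ l))) (reversepath l +++ ((reversepath b +++ (M +++ b)) +++ l))"
proof -
  have eq: "reversepath (b +++ l) = reversepath l +++ reversepath b" using e by (simp add: reversepath_joinpaths)
  have h1: "hp ((reversepath l +++ reversepath b) +++ (M +++ (b +++ l)))
       (reversepath l +++ (reversepath b +++ (M +++ (b +++ l))))"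
    by (rule A2) (use assms in auto)
  have h2: "hp (reversepath l +++ (reversepath b +++ (M +++ (b +++ l))))
       (reversepath l +++ ((reversepath b +++ (M +++ b)) +++ l))"
  proof (rule hp_joinr)
    have "hp (reversepath b +++ (M +++ (b +++ l))) (reversepath b +++ ((M +++ b) +++ l))"
      by (rule hp_joinr[OF _ A1]) (use assms in auto)
    also have "hp (reversepath b +++ ((M +++ b) +++ l)) ((reversepath b +++ (M +++ b)) +++ l)"
      by (rule A1) (use assms in auto)
    finally show "hp (reversepath b +++ (M +++ (b +++ l))) ((reversepath b +++ (M +++ b)) +++ l)" .
  qed (use assms in auto)
  show ?thesis unfolding eq using h1 h2 by (rule homotopic_paths_trans)
qed

lemma L0_opU: "y \<in> B \<Longrightarrow> loopat z0 l \<Longrightarrow> hp (L0 (opU y l)) (reversepath l +++ (L0 y +++ l))"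
  unfolding L0_def opU_def using B_fst[of y]
  by (auto simp: loopat_def mstart mfin intro!: LOP)

lemma L1_opD: "y \<in> B \<Longrightarrow> loopat z1 l \<Longrightarrow> hp (L1 (opD y l)) (reversepath l +++ (L1 y +++ l))"
  unfolding L1_def opD_def using B_snd[of y]
  by (auto simp: loopat_def mstart mfin intro!: LOP)

lemma cU1: assumes x: "x \<in> B" and l: "loopat z0 l" shows "(opU (opU x l) (reversepath l), x) \<in> R"
proof (rule REL_HOM)
  show "opU (opU x l) (reversepath l) \<in> B" by (intro opU_B loop_rev x l)
  show "x \<in> B" by (rule x)
  have ok: "okp (fst x)" "pathfinish (fst x) = z0" using B_fst[OF x] by auto
  show "hp (fst (opU (opU x l) (reversepath l))) (fst x)"
    unfolding opU_def fst_conv snd_conv by (rule C3) (use l ok in \<open>auto simp: loopat_def\<close>)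
  show "hp (snd (opU (opU x l) (reversepath l))) (snd x)"
    unfolding opU_def fst_conv snd_conv by (rule hp_refl) (use B_fst[OF x] B_snd[OF x] in auto)
qed
lemma cU2: assumes x: "x \<in> B" and l: "loopat z0 l" shows "(opU (opU x (reversepath l)) l, x) \<in> R"
proof (rule REL_HOM)
  show "opU (opU x (reversepath l)) l \<in> B" by (intro opU_B loop_rev x l)
  show "x \<in> B" by (rule x)
  have ok: "okp (fst x)" "pathfinish (fst x) = z0" using B_fst[OF x] by auto
  show "hp (fst (opU (opU x (reversepath l)) l)) (fst x)"
    unfolding opU_def fst_conv snd_conv by (rule C4) (use l ok in \<open>auto simp: loopat_def\<close>)
  show "hp (snd (opU (opU x (reversepath l)) l)) (snd x)"
    unfolding opU_def fst_conv snd_conv by (rule hp_refl) (use B_fst[OF x] B_snd[OF x] in auto)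
qed
lemma cD1: assumes x: "x \<in> B" and l: "loopat z1 l" shows "(opD (opD x l) (reversepath l), x) \<in> R"
proof (rule REL_HOM)
  show "opD (opD x l) (reversepath l) \<in> B" by (intro opD_B loop_rev x l)
  show "x \<in> B" by (rule x)
  have ok: "okp (snd x)" "pathfinish (snd x) = z1" using B_snd[OF x] by auto
  show "hp (snd (opD (opD x l) (reversepath l))) (snd x)"
    unfolding opD_def fst_conv snd_conv by (rule C3) (use l ok in \<open>auto simp: loopat_def\<close>)
  show "hp (fst (opD (opD x l) (reversepath l))) (fst x)"
    unfolding opD_def fst_conv snd_conv by (rule hp_refl) (use B_fst[OF x] B_snd[OF x] in auto)
qed
lemma cD2: assumes x: "x \<in> B" and l: "loopat z1 l" shows "(opD (opD x (reversepath l)) l, x) \<in> R"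
proof (rule REL_HOM)
  show "opD (opD x (reversepath l)) l \<in> B" by (intro opD_B loop_rev x l)
  show "x \<in> B" by (rule x)
  have ok: "okp (snd x)" "pathfinish (snd x) = z1" using B_snd[OF x] by auto
  show "hp (snd (opD (opD x (reversepath l)) l)) (snd x)"
    unfolding opD_def fst_conv snd_conv by (rule C4) (use l ok in \<open>auto simp: loopat_def\<close>)
  show "hp (fst (opD (opD x (reversepath l)) l)) (fst x)"
    unfolding opD_def fst_conv snd_conv by (rule hp_refl) (use B_fst[OF x] B_snd[OF x] in auto)
qed

lemma K1:
  assumes b: "okp b" and p: "pathstart b \<in> D"
  shows "hp (b +++ reversepath (reversepath b +++ (m (pathstart b) +++ b))) (reversepath (m (pathstart b)) +++ b)"
proof -
  let ?M = "m (pathstart b)"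
  have eq: "reversepath (reversepath b +++ (?M +++ b)) = (reversepath b +++ reversepath ?M) +++ b"
    using p by (simp add: reversepath_joinpaths mstart mfin)
  have h1: "hp (b +++ ((reversepath b +++ reversepath ?M) +++ b)) (b +++ (reversepath b +++ (reversepath ?M +++ b)))"
    by (rule hp_joinr[OF _ A2]) (use b p in \<open>auto simp: mstart mfin\<close>)
  have h2: "hp (b +++ (reversepath b +++ (reversepath ?M +++ b))) (reversepath ?M +++ b)"
    by (rule C2) (use b p in \<open>auto simp: mstart mfin\<close>)
  show ?thesis unfolding eq using h1 h2 by (rule homotopic_paths_trans)
qed

lemma K2:
  assumes b: "okp b" and p: "pathstart b \<in> D"
  shows "hp (reversepath (m (pathstart b)) +++ (b +++ (reversepath b +++ (m (pathstart b) +++ b)))) b"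
proof -
  let ?M = "m (pathstart b)"
  have "hp (reversepath ?M +++ (b +++ (reversepath b +++ (?M +++ b)))) (reversepath ?M +++ (?M +++ b))"
    by (rule hp_joinr[OF _ C2]) (use b p in \<open>auto simp: mstart mfin\<close>)
  also have "hp (reversepath ?M +++ (?M +++ b)) b"
    by (rule C1) (use b p in \<open>auto simp: mstart mfin\<close>)
  finally show ?thesis .
qed

end


context lk begin

definition "rep X = (SOME x. x \<in> X)"
definition "cls x = R `` {x}"
abbreviation "Q \<equiv> B // R"

lemma Rsym: "(x, y) \<in> R \<Longrightarrow> (y, x) \<in> R"
  using equivR by (meson equivE symD)
lemma Rtrans: "(x, y) \<in> R \<Longrightarrow> (y, z) \<in> R \<Longrightarrow> (x, z) \<in> R"
  using equivR by (meson equivE transD)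
lemma Rrefl: "x \<in> B \<Longrightarrow> (x, x) \<in> R"
  using equivR by (meson equivE refl_onD)

lemma cls_in: "x \<in> B \<Longrightarrow> cls x \<in> Q"
  by (simp add: cls_def quotientI)
lemma cls_eqI: "(x, y) \<in> R \<Longrightarrow> cls x = cls y"
  unfolding cls_def using equivR by (rule equiv_class_eq)
lemma rep_in: assumes "X \<in> Q" shows "rep X \<in> B" "cls (rep X) = X" "rep X \<in> X"
proof -
  obtain x where x: "x \<in> B" "X = R `` {x}" using assms by (rule quotientE)
  have "x \<in> X" using x Rrefl by simp
  then have r: "rep X \<in> X" unfolding rep_def by (rule someI)
  then have xr: "(x, rep X) \<in> R" using x by simp
  then show "rep X \<in> B" by (auto simp: R_iff)
  show "cls (rep X) = X" using cls_eqI[OF Rsym[OF xr]] x by (simp add: cls_def)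
  show "rep X \<in> X" by (rule r)
qed
lemma rep_cls: "x \<in> B \<Longrightarrow> (rep (cls x), x) \<in> R"
  using rep_in(3)[OF cls_in] by (simp add: cls_def Rsym)

lemma up_rep: "BL_up R m X Y = cls (opU (rep X) (L0 (rep Y)))"
  by (simp add: BL_up_def rep_def opU_def L0_def split_beta cls_def)
lemma down_rep: "BL_down R m X Y = cls (opD (rep X) (L1 (rep Y)))"
  by (simp add: BL_down_def rep_def opD_def L1_def split_beta cls_def)

lemma up_eq: assumes x: "x \<in> B" and y: "y \<in> B" shows "BL_up R m (cls x) (cls y) = cls (opU x (L0 y))"
proof -
  have "(opU (rep (cls x)) (L0 (rep (cls y))), opU x (L0 y)) \<in> R"
    by (rule W1[OF rep_cls[OF x] L0_loop]) (use rep_cls[OF y] W0 rep_in cls_in y in auto)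
  then show ?thesis by (simp add: up_rep cls_eqI)
qed
lemma down_eq: assumes x: "x \<in> B" and y: "y \<in> B" shows "BL_down R m (cls x) (cls y) = cls (opD x (L1 y))"
proof -
  have "(opD (rep (cls x)) (L1 (rep (cls y))), opD x (L1 y)) \<in> R"
    by (rule W1D[OF rep_cls[OF x] L1_loop]) (use rep_cls[OF y] W0 rep_in cls_in y in auto)
  then show ?thesis by (simp add: down_rep cls_eqI)
qed

lemma up_in: "X \<in> Q \<Longrightarrow> Y \<in> Q \<Longrightarrow> BL_up R m X Y \<in> Q"
  by (simp add: up_rep cls_in opU_B L0_loop rep_in)
lemma down_in: "X \<in> Q \<Longrightarrow> Y \<in> Q \<Longrightarrow> BL_down R m X Y \<in> Q"
  by (simp add: down_rep cls_in opD_B L1_loop rep_in)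

end


context lk begin

lemma upB[simp]: "x \<in> B \<Longrightarrow> y \<in> B \<Longrightarrow> opU x (L0 y) \<in> B"
  by (simp add: opU_B L0_loop)
lemma downB[simp]: "x \<in> B \<Longrightarrow> y \<in> B \<Longrightarrow> opD x (L1 y) \<in> B"
  by (simp add: opD_B L1_loop)
lemma upBr[simp]: "x \<in> B \<Longrightarrow> y \<in> B \<Longrightarrow> opU x (reversepath (L0 y)) \<in> B"
  by (simp add: opU_B L0_loop loop_rev)
lemma downBr[simp]: "x \<in> B \<Longrightarrow> y \<in> B \<Longrightarrow> opD x (reversepath (L1 y)) \<in> B"
  by (simp add: opD_B L1_loop loop_rev)

lemma hp_loop_refl: "loopat z l \<Longrightarrow> hp l l"
  by (simp add: loopat_def okp_def)

lemma bijU: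
  assumes A: "A \<in> Q"
  shows "bij_betw (\<lambda>X. BL_up R m X A) Q Q"
proof -
  define a where "a = rep A"
  have a: "a \<in> B" and Aeq: "A = cls a" using rep_in[OF A] by (auto simp: a_def)
  define La where "La = L0 a"
  have La: "loopat z0 La" unfolding La_def by (rule L0_loop[OF a])
  define g where "g X = cls (opU (rep X) (reversepath La))" for X
  show ?thesis
  proof (rule bij_betw_byWitness[where f'=g])
    show "\<forall>X\<in>Q. g (BL_up R m X A) = X"
    proof
      fix X assume X: "X \<in> Q"
      define x where "x = rep X"
      have x: "x \<in> B" and Xeq: "X = cls x" using rep_in[OF X] by (auto simp: x_def)
      have up: "BL_up R m X A = cls (opU x La)" using up_eq[OF x a] by (simp add: Xeq Aeq La_def)
      have u: "opU x La \<in> B" using x a by (simp add: La_def)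
      have "(opU (rep (cls (opU x La))) (reversepath La), opU (opU x La) (reversepath La)) \<in> R"
        by (rule W1[OF rep_cls[OF u] loop_rev[OF La] hp_loop_refl[OF loop_rev[OF La]]])
      then have "(opU (rep (cls (opU x La))) (reversepath La), x) \<in> R"
        using cU1[OF x La] by (rule Rtrans)
      then have "cls (opU (rep (cls (opU x La))) (reversepath La)) = cls x" by (rule cls_eqI)
      then show "g (BL_up R m X A) = X" unfolding g_def up using Xeq by simp
    qed
    show "\<forall>Y\<in>Q. BL_up R m (g Y) A = Y"
    proof
      fix Y assume Y: "Y \<in> Q"
      define y where "y = rep Y"
      have y: "y \<in> B" and Yeq: "Y = cls y" using rep_in[OF Y] by (auto simp: y_def)
      have gY: "g Y = cls (opU y (reversepath La))" by (simp add: g_def y_def)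
      have "BL_up R m (g Y) A = cls (opU (opU y (reversepath La)) La)"
        unfolding gY Aeq by (subst up_eq) (use y a in \<open>auto simp: La_def\<close>)
      also have "\<dots> = Y" unfolding Yeq by (rule cls_eqI[OF cU2[OF y La]])
      finally show "BL_up R m (g Y) A = Y" .
    qed
    show "(\<lambda>X. BL_up R m X A) ` Q \<subseteq> Q" using up_in A by auto
    show "g ` Q \<subseteq> Q" using a rep_in(1) by (auto simp: g_def La_def intro!: cls_in)
  qed
qed

lemma bijD:
  assumes A: "A \<in> Q"
  shows "bij_betw (\<lambda>X. BL_down R m X A) Q Q"
proof -
  define a where "a = rep A"
  have a: "a \<in> B" and Aeq: "A = cls a" using rep_in[OF A] by (auto simp: a_def)
  define La where "La = L1 a"
  have La: "loopat z1 La" unfolding La_def by (rule L1_loop[OF a])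
  define g where "g X = cls (opD (rep X) (reversepath La))" for X
  show ?thesis
  proof (rule bij_betw_byWitness[where f'=g])
    show "\<forall>X\<in>Q. g (BL_down R m X A) = X"
    proof
      fix X assume X: "X \<in> Q"
      define x where "x = rep X"
      have x: "x \<in> B" and Xeq: "X = cls x" using rep_in[OF X] by (auto simp: x_def)
      have up: "BL_down R m X A = cls (opD x La)" using down_eq[OF x a] by (simp add: Xeq Aeq La_def)
      have u: "opD x La \<in> B" using x a by (simp add: La_def)
      have "(opD (rep (cls (opD x La))) (reversepath La), opD (opD x La) (reversepath La)) \<in> R"
        by (rule W1D[OF rep_cls[OF u] loop_rev[OF La] hp_loop_refl[OF loop_rev[OF La]]])
      then have "(opD (rep (cls (opD x La))) (reversepath La), x) \<in> R"
        using cD1[OF x La] by (rule Rtrans)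
      then have "cls (opD (rep (cls (opD x La))) (reversepath La)) = cls x" by (rule cls_eqI)
      then show "g (BL_down R m X A) = X" unfolding g_def up using Xeq by simp
    qed
    show "\<forall>Y\<in>Q. BL_down R m (g Y) A = Y"
    proof
      fix Y assume Y: "Y \<in> Q"
      define y where "y = rep Y"
      have y: "y \<in> B" and Yeq: "Y = cls y" using rep_in[OF Y] by (auto simp: y_def)
      have gY: "g Y = cls (opD y (reversepath La))" by (simp add: g_def y_def)
      have "BL_down R m (g Y) A = cls (opD (opD y (reversepath La)) La)"
        unfolding gY Aeq by (subst down_eq) (use y a in \<open>auto simp: La_def\<close>)
      also have "\<dots> = Y" unfolding Yeq by (rule cls_eqI[OF cD2[OF y La]])
      finally show "BL_down R m (g Y) A = Y" .
    qed
    show "(\<lambda>X. BL_down R m X A) ` Q \<subseteq> Q" using down_in A by auto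
    show "g ` Q \<subseteq> Q" using a rep_in(1) by (auto simp: g_def La_def intro!: cls_in)
  qed
qed

end


context lk begin

lemma Qrep: assumes "X \<in> Q" obtains x where "x \<in> B" "X = cls x"
  using rep_in[OF assms] by metis

lemma bijS: "bij_betw (\<lambda>(X, Y). (BL_down R m Y X, BL_up R m X Y)) (Q \<times> Q) (Q \<times> Q)"
proof -
  define T where "T = (\<lambda>(U, W). (cls (opU (rep W) (reversepath (L0 (rep U)))), cls (opD (rep U) (reversepath (L1 (rep W))))))"
  show ?thesis
  proof (rule bij_betw_byWitness[where f'=T])
    show "\<forall>P\<in>Q \<times> Q. T ((\<lambda>(X, Y). (BL_down R m Y X, BL_up R m X Y)) P) = P"
    proof
      fix P assume P: "P \<in> Q \<times> Q"
      obtain X Y where XY: "P = (X, Y)" "X \<in> Q" "Y \<in> Q" using P by auto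
      obtain x where x: "x \<in> B" "X = cls x" using Qrep[OF XY(2)] by blast
      obtain y where y: "y \<in> B" "Y = cls y" using Qrep[OF XY(3)] by blast
      define u0 where "u0 = opD y (L1 x)"
      define w0 where "w0 = opU x (L0 y)"
      have u0: "u0 \<in> B" and w0: "w0 \<in> B" using x y by (auto simp: u0_def w0_def)
      have S: "(\<lambda>(X, Y). (BL_down R m Y X, BL_up R m X Y)) P = (cls u0, cls w0)"
        using x y by (simp add: XY down_eq up_eq u0_def w0_def)
      define u where "u = rep (cls u0)"
      define w where "w = rep (cls w0)"
      have uu: "(u, u0) \<in> R" and ww: "(w, w0) \<in> R" using rep_cls u0 w0 by (auto simp: u_def w_def)
      have hu: "hp (L0 u) (L0 y)" using W0[OF uu] by (simp add: u0_def)
      have hw: "hp (L1 w) (L1 x)" using W0[OF ww] by (simp add: w0_def)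
      have u: "u \<in> B" and w: "w \<in> B" using uu ww by (auto simp: R_iff)
      have "(opU w (reversepath (L0 u)), opU w0 (reversepath (L0 y))) \<in> R"
        by (rule W1[OF ww loop_rev[OF L0_loop[OF u]] hp_rev[OF hu]])
      moreover have "(opU w0 (reversepath (L0 y)), x) \<in> R"
        unfolding w0_def by (rule cU1[OF x(1) L0_loop[OF y(1)]])
      ultimately have 1: "cls (opU w (reversepath (L0 u))) = X" using x by (metis Rtrans cls_eqI)
      have "(opD u (reversepath (L1 w)), opD u0 (reversepath (L1 x))) \<in> R"
        by (rule W1D[OF uu loop_rev[OF L1_loop[OF w]] hp_rev[OF hw]])
      moreover have "(opD u0 (reversepath (L1 x)), y) \<in> R"
        unfolding u0_def by (rule cD1[OF y(1) L1_loop[OF x(1)]])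
      ultimately have 2: "cls (opD u (reversepath (L1 w))) = Y" using y by (metis Rtrans cls_eqI)
      show "T ((\<lambda>(X, Y). (BL_down R m Y X, BL_up R m X Y)) P) = P"
        unfolding S T_def using 1 2 by (simp add: XY u_def w_def)
    qed
    show "\<forall>P\<in>Q \<times> Q. (\<lambda>(X, Y). (BL_down R m Y X, BL_up R m X Y)) (T P) = P"
    proof
      fix P assume P: "P \<in> Q \<times> Q"
      obtain U W where UW: "P = (U, W)" "U \<in> Q" "W \<in> Q" using P by auto
      define u where "u = rep U"
      define w where "w = rep W"
      have u: "u \<in> B" "U = cls u" using rep_in[OF UW(2)] by (auto simp: u_def)
      have w: "w \<in> B" "W = cls w" using rep_in[OF UW(3)] by (auto simp: w_def)
      define x' where "x' = opU w (reversepath (L0 u))"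
      define y' where "y' = opD u (reversepath (L1 w))"
      have x': "x' \<in> B" and y': "y' \<in> B" using u w by (auto simp: x'_def y'_def)
      have TP: "T P = (cls x', cls y')" by (simp add: T_def UW x'_def y'_def u_def w_def)
      have "BL_down R m (cls y') (cls x') = cls (opD y' (L1 x'))" by (rule down_eq[OF y' x'])
      also have "\<dots> = U" unfolding u(2) y'_def x'_def L1_opU by (rule cls_eqI[OF cD2[OF u(1) L1_loop[OF w(1)]]])
      finally have 1: "BL_down R m (cls y') (cls x') = U" .
      have "BL_up R m (cls x') (cls y') = cls (opU x' (L0 y'))" by (rule up_eq[OF x' y'])
      also have "\<dots> = W" unfolding w(2) y'_def x'_def L0_opD by (rule cls_eqI[OF cU2[OF w(1) L0_loop[OF u(1)]]])
      finally have 2: "BL_up R m (cls x') (cls y') = W" .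
      show "(\<lambda>(X, Y). (BL_down R m Y X, BL_up R m X Y)) (T P) = P"
        unfolding TP using 1 2 UW(1) by simp
    qed
    show "(\<lambda>(X, Y). (BL_down R m Y X, BL_up R m X Y)) ` (Q \<times> Q) \<subseteq> Q \<times> Q"
      using up_in down_in by auto
    show "T ` (Q \<times> Q) \<subseteq> Q \<times> Q"
      using rep_in(1) by (auto simp: T_def intro!: cls_in)
  qed
qed

end


context lk begin

lemma KEY2a: assumes a: "a \<in> B" shows "(opU a (reversepath (L0 a)), opD a (L1 a)) \<in> R"
proof -
  let ?p = "pathstart (fst a)"
  have p: "?p \<in> D" and ok0: "okp (fst a)" using B_fst[OF a] by auto
  have ok1: "okp (snd a)" and ss: "pathstart (snd a) = ?p" using B_snd[OF a] B_ss[OF a] by auto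
  show ?thesis
  proof (rule BR2[OF upBr[OF a a] downB[OF a a], of "reversepath (m ?p)"])
    show "path (reversepath (m ?p))" using mpath[OF p] by simp
    show "path_image (reversepath (m ?p)) \<subseteq> D" using mimg[OF p] by simp
    show "pathstart (reversepath (m ?p)) = pathstart (fst (opU a (reversepath (L0 a))))"
      using p by (simp add: opU_def mfin)
    show "pathfinish (reversepath (m ?p)) = pathstart (fst (opD a (L1 a)))"
      using p by (simp add: opD_def mstart)
    show "hp (fst (opU a (reversepath (L0 a)))) (reversepath (m ?p) +++ fst (opD a (L1 a)))"
      unfolding opU_def opD_def L0_def fst_conv by (rule K1[OF ok0 p])
    show "hp (snd (opU a (reversepath (L0 a)))) (reversepath (m ?p) +++ snd (opD a (L1 a)))"
      unfolding opU_def opD_def L1_def snd_conv using K2[OF ok1] ss p by (simp add: hp_sym)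
  qed
qed

lemma KEY2b: assumes a: "a \<in> B" shows "(opD a (reversepath (L1 a)), opU a (L0 a)) \<in> R"
proof -
  let ?p = "pathstart (fst a)"
  have p: "?p \<in> D" and ok0: "okp (fst a)" using B_fst[OF a] by auto
  have ok1: "okp (snd a)" and ss: "pathstart (snd a) = ?p" using B_snd[OF a] B_ss[OF a] by auto
  show ?thesis
  proof (rule BR2[OF downBr[OF a a] upB[OF a a], of "reversepath (m ?p)"])
    show "path (reversepath (m ?p))" using mpath[OF p] by simp
    show "path_image (reversepath (m ?p)) \<subseteq> D" using mimg[OF p] by simp
    show "pathstart (reversepath (m ?p)) = pathstart (fst (opD a (reversepath (L1 a))))"
      using p by (simp add: opD_def mfin)
    show "pathfinish (reversepath (m ?p)) = pathstart (fst (opU a (L0 a)))"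
      using p by (simp add: opU_def mstart)
    show "hp (fst (opD a (reversepath (L1 a)))) (reversepath (m ?p) +++ fst (opU a (L0 a)))"
      unfolding opU_def opD_def L0_def fst_conv using K2[OF ok0 p] by (simp add: hp_sym)
    show "hp (snd (opD a (reversepath (L1 a)))) (reversepath (m ?p) +++ snd (opU a (L0 a)))"
      unfolding opU_def opD_def L1_def snd_conv using K1[OF ok1] ss p by simp
  qed
qed

lemma ax2U: assumes A: "A \<in> Q"
  shows "inv_into Q (\<lambda>X. BL_up R m X A) A = BL_down R m A (inv_into Q (\<lambda>X. BL_up R m X A) A)"
proof -
  obtain a where a: "a \<in> B" "A = cls a" using Qrep[OF A] by blast
  define y0 where "y0 = opU a (reversepath (L0 a))"
  have y0: "y0 \<in> B" using a by (simp add: y0_def)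
  have "BL_up R m (cls y0) A = cls (opU y0 (L0 a))" using up_eq[OF y0 a(1)] a(2) by simp
  also have "\<dots> = cls a" unfolding y0_def by (rule cls_eqI[OF cU2[OF a(1) L0_loop[OF a(1)]]])
  finally have f: "BL_up R m (cls y0) A = A" using a(2) by simp
  have "inv_into Q (\<lambda>X. BL_up R m X A) A = cls y0"
    using inv_into_f_f[OF bij_betw_imp_inj_on[OF bijU[OF A]] cls_in[OF y0]] f by simp
  moreover have "BL_down R m A (cls y0) = cls y0"
  proof -
    have "BL_down R m A (cls y0) = cls (opD a (L1 y0))" using down_eq[OF a(1) y0] a(2) by simp
    also have "\<dots> = cls (opD a (L1 a))" by (simp add: y0_def)
    also have "\<dots> = cls y0" unfolding y0_def by (rule cls_eqI[OF Rsym[OF KEY2a[OF a(1)]]])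
    finally show ?thesis .
  qed
  ultimately show ?thesis by simp
qed

lemma ax2D: assumes A: "A \<in> Q"
  shows "inv_into Q (\<lambda>X. BL_down R m X A) A = BL_up R m A (inv_into Q (\<lambda>X. BL_down R m X A) A)"
proof -
  obtain a where a: "a \<in> B" "A = cls a" using Qrep[OF A] by blast
  define y1 where "y1 = opD a (reversepath (L1 a))"
  have y1: "y1 \<in> B" using a by (simp add: y1_def)
  have "BL_down R m (cls y1) A = cls (opD y1 (L1 a))" using down_eq[OF y1 a(1)] a(2) by simp
  also have "\<dots> = cls a" unfolding y1_def by (rule cls_eqI[OF cD2[OF a(1) L1_loop[OF a(1)]]])
  finally have f: "BL_down R m (cls y1) A = A" using a(2) by simp
  have "inv_into Q (\<lambda>X. BL_down R m X A) A = cls y1"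
    using inv_into_f_f[OF bij_betw_imp_inj_on[OF bijD[OF A]] cls_in[OF y1]] f by simp
  moreover have "BL_up R m A (cls y1) = cls y1"
  proof -
    have "BL_up R m A (cls y1) = cls (opU a (L0 y1))" using up_eq[OF a(1) y1] a(2) by simp
    also have "\<dots> = cls (opU a (L0 a))" by (simp add: y1_def)
    also have "\<dots> = cls y1" unfolding y1_def by (rule cls_eqI[OF Rsym[OF KEY2b[OF a(1)]]])
    finally show ?thesis .
  qed
  ultimately show ?thesis by simp
qed

lemma ASSOC3:
  assumes a0: "okp a0" "pathfinish a0 = z" and P: "loopat z P" and Q: "loopat z Q'"
    and hX: "hp X (reversepath Q' +++ (P +++ Q'))"
  shows "hp ((a0 +++ P) +++ Q') ((a0 +++ Q') +++ X)"
proof -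
  have "hp ((a0 +++ Q') +++ X) ((a0 +++ Q') +++ (reversepath Q' +++ (P +++ Q')))"
    by (rule hp_joinr[OF _ hX]) (use a0 Q hp_ends[OF hX] in \<open>auto simp: loopat_def\<close>)
  also have "hp ((a0 +++ Q') +++ (reversepath Q' +++ (P +++ Q'))) (a0 +++ (Q' +++ (reversepath Q' +++ (P +++ Q'))))"
    by (rule A2) (use a0 Q P in \<open>auto simp: loopat_def\<close>)
  also have "hp (a0 +++ (Q' +++ (reversepath Q' +++ (P +++ Q')))) (a0 +++ (P +++ Q'))"
    by (rule hp_joinr[OF _ C2]) (use a0 Q P in \<open>auto simp: loopat_def\<close>)
  also have "hp (a0 +++ (P +++ Q')) ((a0 +++ P) +++ Q')"
    by (rule A1) (use a0 Q P in \<open>auto simp: loopat_def\<close>)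
  finally show ?thesis by (rule hp_sym)
qed

lemma ax3:
  assumes A: "A \<in> Q" and Bq: "Bq \<in> Q" and C: "C \<in> Q"
  shows "BL_up R m (BL_up R m A Bq) C = BL_up R m (BL_up R m A (BL_down R m C Bq)) (BL_up R m Bq C) \<and>
     BL_up R m (BL_down R m A Bq) (BL_down R m C (BL_up R m Bq A)) = BL_down R m (BL_up R m A C) (BL_up R m Bq (BL_down R m C A)) \<and>
     BL_down R m (BL_down R m A Bq) C = BL_down R m (BL_down R m A (BL_up R m C Bq)) (BL_down R m Bq C)"
proof -
  obtain a where a: "a \<in> B" "A = cls a" using Qrep[OF A] by blast
  obtain b where b: "b \<in> B" "Bq = cls b" using Qrep[OF Bq] by blast
  obtain c where c: "c \<in> B" "C = cls c" using Qrep[OF C] by blast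
  have e1: "(opU (opU a (L0 b)) (L0 c), opU (opU a (L0 c)) (L0 (opU b (L0 c)))) \<in> R"
  proof (rule REL_HOM)
    show "opU (opU a (L0 b)) (L0 c) \<in> B" "opU (opU a (L0 c)) (L0 (opU b (L0 c))) \<in> B" using a b c by auto
    show "hp (fst (opU (opU a (L0 b)) (L0 c))) (fst (opU (opU a (L0 c)) (L0 (opU b (L0 c)))))"
      unfolding opU_def fst_conv
      by (rule ASSOC3[OF _ _ L0_loop[OF b(1)] L0_loop[OF c(1)]]) (use B_fst[OF a(1)] L0_opU[OF b(1) L0_loop[OF c(1)]] in \<open>auto simp: opU_def\<close>)
    show "hp (snd (opU (opU a (L0 b)) (L0 c))) (snd (opU (opU a (L0 c)) (L0 (opU b (L0 c)))))"
      using B_snd[OF a(1)] by (simp add: opU_def okp_def)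
  qed
  have e3: "(opD (opD a (L1 b)) (L1 c), opD (opD a (L1 c)) (L1 (opD b (L1 c)))) \<in> R"
  proof (rule REL_HOM)
    show "opD (opD a (L1 b)) (L1 c) \<in> B" "opD (opD a (L1 c)) (L1 (opD b (L1 c))) \<in> B" using a b c by auto
    show "hp (snd (opD (opD a (L1 b)) (L1 c))) (snd (opD (opD a (L1 c)) (L1 (opD b (L1 c)))))"
      unfolding opD_def snd_conv
      by (rule ASSOC3[OF _ _ L1_loop[OF b(1)] L1_loop[OF c(1)]]) (use B_snd[OF a(1)] L1_opD[OF b(1) L1_loop[OF c(1)]] in \<open>auto simp: opD_def\<close>)
    show "hp (fst (opD (opD a (L1 b)) (L1 c))) (fst (opD (opD a (L1 c)) (L1 (opD b (L1 c)))))"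
      using B_fst[OF a(1)] by (simp add: opD_def okp_def)
  qed
  note ab = upB[OF a(1) b(1)] downB[OF a(1) b(1)] upB[OF a(1) c(1)] downB[OF a(1) c(1)]
    upB[OF b(1) c(1)] downB[OF b(1) c(1)] upB[OF c(1) b(1)] downB[OF c(1) b(1)]
    upB[OF b(1) a(1)] downB[OF c(1) a(1)]
  have q1: "BL_up R m (BL_up R m A Bq) C = cls (opU (opU a (L0 b)) (L0 c))"
    using up_eq[OF a(1) b(1)] up_eq[OF ab(1) c(1)] a(2) b(2) c(2) by simp
  have q2: "BL_up R m (BL_up R m A (BL_down R m C Bq)) (BL_up R m Bq C) = cls (opU (opU a (L0 c)) (L0 (opU b (L0 c))))"
  proof -
    have "BL_up R m A (BL_down R m C Bq) = cls (opU a (L0 c))"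
      using down_eq[OF c(1) b(1)] up_eq[OF a(1) ab(8)] a(2) b(2) c(2) by simp
    moreover have "BL_up R m Bq C = cls (opU b (L0 c))" using up_eq[OF b(1) c(1)] b(2) c(2) by simp
    ultimately show ?thesis using up_eq[OF ab(3) ab(5)] by simp
  qed
  have q3: "BL_down R m (BL_down R m A Bq) C = cls (opD (opD a (L1 b)) (L1 c))"
    using down_eq[OF a(1) b(1)] down_eq[OF ab(2) c(1)] a(2) b(2) c(2) by simp
  have q4: "BL_down R m (BL_down R m A (BL_up R m C Bq)) (BL_down R m Bq C) = cls (opD (opD a (L1 c)) (L1 (opD b (L1 c))))"
  proof -
    have "BL_down R m A (BL_up R m C Bq) = cls (opD a (L1 c))"
      using up_eq[OF c(1) b(1)] down_eq[OF a(1) ab(7)] a(2) b(2) c(2) by simp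
    moreover have "BL_down R m Bq C = cls (opD b (L1 c))" using down_eq[OF b(1) c(1)] b(2) c(2) by simp
    ultimately show ?thesis using down_eq[OF ab(4) ab(6)] by simp
  qed
  have q5: "BL_up R m (BL_down R m A Bq) (BL_down R m C (BL_up R m Bq A)) = cls (opU (opD a (L1 b)) (L0 c))"
  proof -
    have "BL_down R m C (BL_up R m Bq A) = cls (opD c (L1 b))"
      using up_eq[OF b(1) a(1)] down_eq[OF c(1) ab(9)] a(2) b(2) c(2) by simp
    moreover have "BL_down R m A Bq = cls (opD a (L1 b))" using down_eq[OF a(1) b(1)] a(2) b(2) by simp
    ultimately show ?thesis using up_eq[OF ab(2) ab(8)] by simp
  qed
  have q6: "BL_down R m (BL_up R m A C) (BL_up R m Bq (BL_down R m C A)) = cls (opD (opU a (L0 c)) (L1 b))"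
  proof -
    have "BL_up R m Bq (BL_down R m C A) = cls (opU b (L0 c))"
      using down_eq[OF c(1) a(1)] up_eq[OF b(1) ab(10)] a(2) b(2) c(2) by simp
    moreover have "BL_up R m A C = cls (opU a (L0 c))" using up_eq[OF a(1) c(1)] a(2) c(2) by simp
    ultimately show ?thesis using down_eq[OF ab(3) ab(5)] by simp
  qed
  show ?thesis
    unfolding q1 q2 q3 q4 q5 q6 using cls_eqI[OF e1] cls_eqI[OF e3] by (simp add: opUD)
qed

theorem biq: "biquandle Q (BL_up R m) (BL_down R m)"
proof -
  have c1: "\<forall>x\<in>Q. \<forall>y\<in>Q. BL_up R m x y \<in> Q \<and> BL_down R m x y \<in> Q" using up_in down_in by blast
  have c2: "\<forall>a\<in>Q. bij_betw (\<lambda>x. BL_up R m x a) Q Q \<and> bij_betw (\<lambda>x. BL_down R m x a) Q Q" using bijU bijD by blast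
  have c4: "\<forall>a\<in>Q. inv_into Q (\<lambda>x. BL_up R m x a) a = BL_down R m a (inv_into Q (\<lambda>x. BL_up R m x a) a)"
    using ax2U by blast
  have c5: "\<forall>a\<in>Q. inv_into Q (\<lambda>x. BL_down R m x a) a = BL_up R m a (inv_into Q (\<lambda>x. BL_down R m x a) a)"
    using ax2D by blast
  have c6: "\<forall>a\<in>Q. \<forall>b\<in>Q. \<forall>c\<in>Q.
        BL_up R m (BL_up R m a b) c = BL_up R m (BL_up R m a (BL_down R m c b)) (BL_up R m b c) \<and>
        BL_up R m (BL_down R m a b) (BL_down R m c (BL_up R m b a)) = BL_down R m (BL_up R m a c) (BL_up R m b (BL_down R m c a)) \<and>
        BL_down R m (BL_down R m a b) c = BL_down R m (BL_down R m a (BL_up R m c b)) (BL_down R m b c)"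
    using ax3 by blast
  show ?thesis unfolding biquandle_def
    by (intro conjI c1 c2 bijS c4 c5 c6)
qed

end



lemma solid_tori_eq: "solid_tori k = {..<k} \<times> (sphere 0 1 \<times> cball 0 1)"
  by (auto simp: solid_tori_def)
lemma compact_solid_tori: "compact (solid_tori k)"
  unfolding solid_tori_eq by (intro compact_Times compact_sphere compact_cball) (simp add: finite_imp_compact)
lemma boundary_sub: "boundary_tori k \<subseteq> solid_tori k"
  by (auto simp: boundary_tori_def solid_tori_def)

definition Fch :: "nat \<times> complex \<times> complex \<Rightarrow> complex \<times> real" where
  "Fch y = (complex_of_real (2 + Re (snd (snd y))) * fst (snd y), Im (snd (snd y)))"

lemma Fch_cont: "continuous_on A Fch"
  unfolding Fch_def by (intro continuous_intros)

lemma Fch_norm: assumes "cmod u = 1" "cmod w \<le> 1"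
  shows "norm (fst (Fch (j, u, w))) = 2 + Re w" "snd (Fch (j, u, w)) = Im w"
proof -
  have "\<bar>Re w\<bar> \<le> 1" using abs_Re_le_cmod[of w] assms by linarith
  then have e: "\<bar>2 + Re w\<bar> = 2 + Re w" by simp
  show "norm (fst (Fch (j, u, w))) = 2 + Re w"
    unfolding Fch_def fst_conv snd_conv norm_mult norm_of_real e using assms by simp
  show "snd (Fch (j, u, w)) = Im w" by (simp add: Fch_def)
qed

lemma Fch_inj: assumes "a \<in> solid_tori k" "b \<in> solid_tori k" "fst a = fst b" "Fch a = Fch b" shows "a = b"
proof -
  obtain i u w where a: "a = (i, u, w)" "cmod u = 1" "cmod w \<le> 1" using assms(1) by (auto simp: solid_tori_def)
  obtain j u' w' where b: "b = (j, u', w')" "cmod u' = 1" "cmod w' \<le> 1" using assms(2) by (auto simp: solid_tori_def)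
  have ij: "i = j" using assms(3) a b by simp
  have "norm (fst (Fch a)) = norm (fst (Fch b))" "snd (Fch a) = snd (Fch b)" using assms(4) by auto
  then have re: "Re w = Re w'" and im: "Im w = Im w'" using Fch_norm[of u w i] Fch_norm[of u' w' j] a b by auto
  then have ww: "w = w'" by (simp add: complex_eq_iff)
  have "complex_of_real (2 + Re w) * u = complex_of_real (2 + Re w) * u'"
    using assms(4) a b ww by (simp add: Fch_def)
  moreover have "\<bar>Re w\<bar> \<le> 1" using abs_Re_le_cmod[of w] a by linarith
  then have "complex_of_real (2 + Re w) \<noteq> 0" by (simp add: complex_eq_iff)
  ultimately have "u = u'" by simp
  then show ?thesis using a b ij ww by simp
qed




lemma bd_sub_ext:
  fixes \<phi> :: "nat \<times> complex \<times> complex \<Rightarrow> real^4"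
  assumes cont: "continuous_on (solid_tori k) \<phi>" and inj: "inj_on \<phi> (solid_tori k)"
    and sph: "\<phi> ` solid_tori k \<subseteq> sphere 0 1"
  shows "bd_nbhd \<phi> k \<subseteq> exterior \<phi> k"
proof
  let ?S = "solid_tori k"
  let ?N = "\<phi> ` ?S"
  define \<psi> where "\<psi> = inv_into ?S \<phi>"
  have cpsi: "continuous_on ?N \<psi>"
    unfolding \<psi>_def by (rule continuous_on_inv[OF cont compact_solid_tori]) (simp add: inj)
  have psiS: "\<psi> y \<in> ?S" if "y \<in> ?N" for y using that unfolding \<psi>_def by (rule inv_into_into)
  have phipsi: "\<phi> (\<psi> y) = y" if "y \<in> ?N" for y using that unfolding \<psi>_def by (rule f_inv_into_f)
  have psiphi: "\<psi> (\<phi> x) = x" if "x \<in> ?S" for x using that inj unfolding \<psi>_def by (simp add: inv_into_f_f)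
  fix p assume "p \<in> bd_nbhd \<phi> k"
  then obtain i u w where x: "p = \<phi> (i, u, w)" "i < k" "cmod u = 1" "cmod w = 1"
    by (auto simp: bd_nbhd_def boundary_tori_def)
  have xS: "(i, u, w) \<in> ?S" using x by (auto simp: solid_tori_def)
  show "p \<in> exterior \<phi> k"
  proof (rule ccontr)
    assume "p \<notin> exterior \<phi> k"
    then obtain e where e: "e > 0" and far: "\<And>y. y \<in> sphere 0 1 - ?N \<Longrightarrow> \<not> dist y p < e"
      unfolding exterior_def nbhd_def closure_approachable by auto
    define U0 where "U0 = sphere (0::real^4) 1 \<inter> ball p e"
    have U0N: "U0 \<subseteq> ?N"
    proof
      fix y assume "y \<in> U0"
      then have "y \<in> sphere 0 1" "dist y p < e" by (auto simp: U0_def dist_commute)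
      then show "y \<in> ?N" using far by blast
    qed
    define V where "V = U0 \<inter> \<psi> -` ({i} \<times> UNIV)"
    have oV: "openin (top_of_set (sphere 0 1)) V"
    proof (rule openin_trans)
      show "openin (top_of_set U0) V" unfolding V_def
        by (rule continuous_openin_preimage_gen[OF continuous_on_subset[OF cpsi U0N]])
           (simp add: open_Times open_discrete)
      show "openin (top_of_set (sphere 0 1)) U0" unfolding U0_def by (rule openin_open_Int) simp
    qed
    have VN: "V \<subseteq> ?N" using U0N by (auto simp: V_def)
    define f where "f = Fch \<circ> \<psi>"
    have cf: "continuous_on V f" unfolding f_def
      by (rule continuous_on_compose[OF continuous_on_subset[OF cpsi VN] Fch_cont])
    have injf: "inj_on f V"
    proof (rule inj_onI)
      fix y1 y2 assume y: "y1 \<in> V" "y2 \<in> V" "f y1 = f y2"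
      have "\<psi> y1 = \<psi> y2"
        by (rule Fch_inj[of _ k]) (use y VN psiS in \<open>auto simp: f_def V_def\<close>)
      then show "y1 = y2" using phipsi y VN by (metis subsetD)
    qed
    have "openin (top_of_set UNIV) (f ` V)"
      by (rule invariance_of_domain_sphere_affine_set[OF cf injf _ _ _ _ oV]) auto
    then have of: "open (f ` V)" by simp
    have pV: "p \<in> V" using x sph xS e psiphi by (auto simp: V_def U0_def)
    have fp: "f p = Fch (i, u, w)" using psiphi[OF xS] x by (simp add: f_def)
    obtain r where r: "r > 0" "ball (Fch (i, u, w)) r \<subseteq> f ` V"
    proof -
      have "Fch (i, u, w) \<in> f ` V" using pV fp by force
      then show ?thesis using of that unfolding open_contains_ball by blast
    qed
    define d where "d = min (r/4) (1/2)"
    have d: "d > 0" "d \<le> r/4" "d \<le> 1/2" using r by (auto simp: d_def)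
    define w2 where "w2 = complex_of_real (1 + d) * w"
    have rew: "\<bar>Re w\<bar> \<le> 1" "\<bar>Im w\<bar> \<le> 1" using abs_Re_le_cmod[of w] abs_Im_le_cmod[of w] x by auto
    have "dist (Fch (i, u, w)) (Fch (i, u, w2)) \<le> norm (complex_of_real (d * Re w) * u) + \<bar>d * Im w\<bar>"
    proof -
      have "Fch (i, u, w) - Fch (i, u, w2) = (- (complex_of_real (d * Re w) * u), - (d * Im w))"
        by (simp add: Fch_def w2_def algebra_simps)
      then have "dist (Fch (i, u, w)) (Fch (i, u, w2)) = norm (- (complex_of_real (d * Re w) * u), - (d * Im w))"
        by (simp only: dist_norm)
      also have "\<dots> \<le> norm (- (complex_of_real (d * Re w) * u)) + norm (- (d * Im w))" by (rule norm_Pair_le)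
      also have "\<dots> = norm (complex_of_real (d * Re w) * u) + \<bar>d * Im w\<bar>" by simp
      finally show ?thesis .
    qed
    also have "\<dots> \<le> d + d" using rew d x
      by (intro add_mono) (auto simp: norm_mult abs_mult mult_left_le)
    also have "\<dots> < r" using d r by linarith
    finally have "Fch (i, u, w2) \<in> f ` V" using r by (auto simp: dist_commute)
    then obtain y where y: "y \<in> V" "Fch (\<psi> y) = Fch (i, u, w2)" by (auto simp: f_def)
    have "\<psi> y \<in> ?S" using psiS y VN by auto
    then obtain j u' w' where py: "\<psi> y = (j, u', w')" "cmod u' = 1" "cmod w' \<le> 1"
      by (cases "\<psi> y") (auto simp: solid_tori_def)
    have pos: "\<bar>2 + (1 + d) * Re w\<bar> = 2 + (1 + d) * Re w"
    proof -
      have "(1 + d) * \<bar>Re w\<bar> \<le> 3/2 * 1" using d rew by (intro mult_mono) auto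
      moreover have "(1 + d) * (- \<bar>Re w\<bar>) \<le> (1 + d) * Re w" using d by (intro mult_left_mono) auto
      ultimately have "-(3/2) \<le> (1 + d) * Re w" by (simp only: mult_minus_right)
      then show ?thesis by simp
    qed
    have "norm (fst (Fch (\<psi> y))) = 2 + Re w'" "snd (Fch (\<psi> y)) = Im w'"
      using Fch_norm[OF py(2,3)] py(1) by auto
    moreover have rw2: "Re w2 = (1 + d) * Re w" "Im w2 = (1 + d) * Im w" by (simp_all add: w2_def)
    moreover have "norm (fst (Fch (i, u, w2))) = 2 + (1 + d) * Re w"
      unfolding Fch_def fst_conv snd_conv norm_mult norm_of_real rw2 pos using x by simp
    moreover have "snd (Fch (i, u, w2)) = (1 + d) * Im w" unfolding Fch_def snd_conv rw2 by simp
    ultimately have "Re w' = (1 + d) * Re w" "Im w' = (1 + d) * Im w" using y(2) by auto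
    then have "w' = complex_of_real (1 + d) * w" by (simp add: complex_eq_iff)
    then have "cmod w' = cmod (complex_of_real (1 + d)) * cmod w" by (simp only: norm_mult)
    also have "\<dots> = 1 + d" using x d by (simp only: norm_of_real) simp
    finally have "cmod w' = 1 + d" .
    then show False using py d by simp
  qed
qed




locale geo =
  fixes k :: nat and \<phi> :: "nat \<times> complex \<times> complex \<Rightarrow> real^4"
  assumes cont: "continuous_on (solid_tori k) \<phi>" and inj: "inj_on \<phi> (solid_tori k)"
begin

abbreviation "S \<equiv> solid_tori k"
abbreviation "D \<equiv> bd_nbhd \<phi> k"
definition "\<psi> = inv_into S \<phi>"
definition "gg x t = (fst x, fst (snd x), snd (snd x) * cis (2 * pi * t))"

lemma cpsi: "continuous_on (\<phi> ` S) \<psi>"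
  unfolding \<psi>_def by (rule continuous_on_inv[OF cont compact_solid_tori]) (simp add: inj)
lemma DN: "D \<subseteq> \<phi> ` S" using boundary_sub by (auto simp: bd_nbhd_def)
lemma psiD: assumes "q \<in> D" shows "\<psi> q \<in> boundary_tori k"
proof -
  obtain x where x: "x \<in> boundary_tori k" "q = \<phi> x" using assms by (auto simp: bd_nbhd_def)
  then have "x \<in> S" using boundary_sub by auto
  then show ?thesis using inj x by (simp add: \<psi>_def inv_into_f_f)
qed
lemma phipsi: "q \<in> \<phi> ` S \<Longrightarrow> \<phi> (\<psi> q) = q"
  unfolding \<psi>_def by (rule f_inv_into_f)
lemma gg_bd: "x \<in> boundary_tori k \<Longrightarrow> gg x t \<in> boundary_tori k"
  by (auto simp: gg_def boundary_tori_def norm_mult)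
lemma gg0: "gg x 0 = x" by (simp add: gg_def)
lemma gg1: "gg x 1 = x"
proof -
  have "cis (2 * pi) = 1" by (simp add: complex_eq_iff)
  then show ?thesis by (simp add: gg_def)
qed
lemma mer_eq: "meridian \<phi> k q = (\<lambda>t. \<phi> (gg (\<psi> q) t))"
  by (simp add: meridian_def split_beta gg_def \<psi>_def)

lemma mpath: assumes q: "q \<in> D" shows "path (meridian \<phi> k q)"
proof -
  have "continuous_on {0..1} (\<lambda>t. gg (\<psi> q) t)" unfolding gg_def by (intro continuous_intros)
  moreover have "(\<lambda>t. gg (\<psi> q) t) ` {0..1} \<subseteq> S" using gg_bd[OF psiD[OF q]] boundary_sub by blast
  ultimately show ?thesis unfolding mer_eq path_def by (rule continuous_on_compose2[OF cont])
qed
lemma mimg: assumes q: "q \<in> D" shows "path_image (meridian \<phi> k q) \<subseteq> D"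
  unfolding mer_eq path_image_def bd_nbhd_def using gg_bd[OF psiD[OF q]] by blast
lemma mstart: "q \<in> D \<Longrightarrow> pathstart (meridian \<phi> k q) = q"
  unfolding mer_eq pathstart_def gg0 using DN phipsi by auto
lemma mfin: "q \<in> D \<Longrightarrow> pathfinish (meridian \<phi> k q) = q"
  unfolding mer_eq pathfinish_def gg1 using DN phipsi by auto

lemma MT0:
  assumes d: "path d" "path_image d \<subseteq> D"
  shows "homotopic_paths D (meridian \<phi> k (pathstart d) +++ d) (d +++ meridian \<phi> k (pathfinish d))"
proof -
  let ?Q = "{0..1::real} \<times> {0..1::real}"
  have cpd: "continuous_on {0..1} (\<psi> \<circ> d)"
    using d DN unfolding path_def path_image_def
    by (intro continuous_on_compose continuous_on_subset[OF cpsi]) auto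
  have cP: "continuous_on ?Q (\<lambda>y. \<psi> (d (fst y)))"
    by (rule continuous_on_compose2[OF cpd[unfolded o_def] continuous_on_fst]) auto
  have dD: "t \<in> {0..1} \<Longrightarrow> d t \<in> D" for t using d by (auto simp: path_image_def)
  define G where "G = (\<lambda>y. \<phi> (gg (\<psi> (d (fst y))) (snd y)))"
  have cG: "continuous_on ?Q G" unfolding G_def
  proof (rule continuous_on_compose2[OF cont])
    show "continuous_on ?Q (\<lambda>y. gg (\<psi> (d (fst y))) (snd y))"
      unfolding gg_def by (intro continuous_intros cP)
    show "(\<lambda>y. gg (\<psi> (d (fst y))) (snd y)) ` ?Q \<subseteq> S"
    proof
      fix z assume "z \<in> (\<lambda>y. gg (\<psi> (d (fst y))) (snd y)) ` ?Q"
      then obtain y where y: "y \<in> ?Q" "z = gg (\<psi> (d (fst y))) (snd y)" by blast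
      then have "fst y \<in> {0..1}" by auto
      then show "z \<in> S" using gg_bd[OF psiD[OF dD]] boundary_sub y by blast
    qed
  qed
  have GD: "G ` ?Q \<subseteq> D"
  proof
    fix z assume "z \<in> G ` ?Q"
    then obtain y where y: "y \<in> ?Q" "z = G y" by blast
    then have "fst y \<in> {0..1}" by auto
    then show "z \<in> D" unfolding y(2) G_def bd_nbhd_def using gg_bd[OF psiD[OF dD]] by blast
  qed
  have sq: "homotopic_paths D ((\<lambda>s. G (0,s)) +++ (\<lambda>t. G (t,1))) ((\<lambda>t. G (t,0)) +++ (\<lambda>s. G (1,s)))"
    by (rule SQ[OF cG GD])
  show ?thesis
  proof (rule hp_cong01[OF sq])
    fix t :: real assume t: "t \<in> {0..1}"
    show "((\<lambda>s. G (0,s)) +++ (\<lambda>t. G (t,1))) t = (meridian \<phi> k (pathstart d) +++ d) t"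
    proof (rule join_cong01[OF _ _ t])
      fix s :: real assume s: "s \<in> {0..1}"
      show "G (0,s) = meridian \<phi> k (pathstart d) s" by (simp add: G_def mer_eq pathstart_def)
      show "G (s,1) = d s" using dD[OF s] DN phipsi by (auto simp: G_def gg1)
    qed
    show "((\<lambda>t. G (t,0)) +++ (\<lambda>s. G (1,s))) t = (d +++ meridian \<phi> k (pathfinish d)) t"
    proof (rule join_cong01[OF _ _ t])
      fix s :: real assume s: "s \<in> {0..1}"
      show "G (s,0) = d s" using dD[OF s] DN phipsi by (auto simp: G_def gg0)
      show "G (1,s) = meridian \<phi> k (pathfinish d) s" by (simp add: G_def mer_eq pathfinish_def)
    qed
  qed
qed

end


context geo begin

lemma MT1:
  assumes DE: "D \<subseteq> E" and d: "path d" "path_image d \<subseteq> D"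
  shows "homotopic_paths E (meridian \<phi> k (pathstart d)) (d +++ (meridian \<phi> k (pathfinish d) +++ reversepath d))"
proof -
  let ?p = "pathstart d" and ?q = "pathfinish d"
  let ?M = "meridian \<phi> k ?p" and ?M' = "meridian \<phi> k ?q"
  have pD: "?p \<in> D" and qD: "?q \<in> D" using d by (auto simp: pathstart_in_path_image pathfinish_in_path_image subsetD)
  have M: "path ?M" "path_image ?M \<subseteq> D" "pathstart ?M = ?p" "pathfinish ?M = ?p"
    using mpath[OF pD] mimg[OF pD] mstart[OF pD] mfin[OF pD] by auto
  have M': "path ?M'" "path_image ?M' \<subseteq> D" "pathstart ?M' = ?q" "pathfinish ?M' = ?q"
    using mpath[OF qD] mimg[OF qD] mstart[OF qD] mfin[OF qD] by auto
  have h1: "homotopic_paths D ?M (?M +++ linepath ?p ?p)"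
    using homotopic_paths_rid[of ?M D] M by (simp add: homotopic_paths_sym)
  have h2: "homotopic_paths D (?M +++ linepath ?p ?p) (?M +++ (d +++ reversepath d))"
    by (rule homotopic_paths_join) (use M d homotopic_paths_rinv[of d D] in \<open>auto simp: homotopic_paths_sym\<close>)
  have h3: "homotopic_paths D (?M +++ (d +++ reversepath d)) ((?M +++ d) +++ reversepath d)"
    by (rule homotopic_paths_assoc) (use M d in auto)
  have h4: "homotopic_paths D ((?M +++ d) +++ reversepath d) ((d +++ ?M') +++ reversepath d)"
    by (rule homotopic_paths_join[OF MT0[OF d]]) (use d in auto)
  have h5: "homotopic_paths D ((d +++ ?M') +++ reversepath d) (d +++ (?M' +++ reversepath d))"
    using homotopic_paths_assoc[of d D ?M' "reversepath d"] M' d by (simp add: homotopic_paths_sym)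
  have "homotopic_paths D ?M (d +++ (?M' +++ reversepath d))"
    using h1 h2 h3 h4 h5 by (meson homotopic_paths_trans)
  then show ?thesis using DE by (rule homotopic_paths_subset)
qed

end

theorem mainTheorem6:
  fixes k :: nat
    and \<phi> :: "nat \<times> complex \<times> complex \<Rightarrow> real^4"
    and h :: "real^3 \<Rightarrow> real^4"
    and v :: "real^3"
  assumes "continuous_on (solid_tori k) \<phi>"
    and "inj_on \<phi> (solid_tori k)"
    and "\<phi> ` solid_tori k \<subseteq> sphere 0 1"
    and "continuous_on (cball 0 1) h"
    and "inj_on h (cball 0 1)"
    and "h ` cball 0 1 \<subseteq> sphere 0 1"
    and "nbhd \<phi> k \<subseteq> h ` ball 0 1"
    and "norm v = 1"
  shows "biquandle
           (BL_hat (exterior \<phi> k) (bd_nbhd \<phi> k) (h v) (h (- v)))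
           (BL_up (BL_rel (exterior \<phi> k) (bd_nbhd \<phi> k) (h v) (h (- v))) (meridian \<phi> k))
           (BL_down (BL_rel (exterior \<phi> k) (bd_nbhd \<phi> k) (h v) (h (- v))) (meridian \<phi> k))"
proof -
  interpret geo k \<phi> using assms(1,2) by unfold_locales
  have DE: "bd_nbhd \<phi> k \<subseteq> exterior \<phi> k" by (rule bd_sub_ext[OF assms(1,2,3)])
  interpret L: lk "exterior \<phi> k" "bd_nbhd \<phi> k" "h v" "h (- v)" "meridian \<phi> k"
  proof
    show "bd_nbhd \<phi> k \<subseteq> exterior \<phi> k" by (rule DE)
  qed (auto simp: mpath mimg mstart mfin intro: MT1[OF DE])
  show ?thesis unfolding BL_hat_def by (rule L.biq)
qed

end
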